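(* For all $1\leqslant p,q\leqslant\infty$, $0<\theta<1$, and $-2\leqslant s_0<s_1\leqslant2$, with $s=(1-\theta)s_0+\theta s_1$, the following hold with equivalent norms: $$B^qL^p(\Omega;\dot H^s(\mathcal O))=\big(L^p(\Omega;\dot H^{s_0}(\mathcal O)),L^p(\Omega;\dot H^{s_1}(\mathcal O))\big)_{\theta,q},$$ $$\big(B^\infty L^p(\Omega;\dot H^{s_0}(\mathcal O)),B^\infty L^p(\Omega;\dot H^{s_1}(\mathcal O))\big)_{\theta,q}=B^qL^p(\Omega;\dot H^s(\mathcal O)).$$
   Context: $\mathcal O\subset\mathbb R^d$ bounded domain; $A=-\Delta$ the Dirichlet Laplacian with $L^2$-orthonormal eigenfunctions $\phi_k$ and eigenvalues $0<\lambda_1\leqslant\lambda_2\leqslant\cdots$ (satisfying Weyl's asymptotics $\lambda_k\sim k^{2/d}$). For $s\in[-2,2]$, $\dot H^s(\mathcal O)=\{v=\sum v_k\phi_k:\|v\|^2_{\dot H^s}=\sum\lambda_k^sv_k^2<\infty\}$. $(\Omega,\mathcal F,\mathbb P)$ is a probability space and $L^p(\Omega;X)$ the Bochner space. For $j\geqslant1$, $\Pi_jv=\sum_{k=2^{j-1}}^{2^j-1}(v,\phi_k)\phi_k$. For $1\leqslant p,q\leqslant\infty$, $s\in[-2,2]$, $B^qL^p(\Omega;\dot H^s(\mathcal O))$ is the space of $v\in L^p(\Omega;\dot H^{-2}(\mathcal O))$ with $\|v\|_{B^qL^p(\Omega;\dot H^s)}=(\sum_{j\geqslant1}\|\Pi_jv\|^q_{L^p(\Omega;\dot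 H^s)})^{1/q}<\infty$ ($\sup_j$ if $q=\infty$). $(X_0,X_1)_{\theta,q}$ denotes the real interpolation space (K-method), with norm $\big(\sum_{j\in\mathbb Z}|a^{-j\theta}K(a^j,f;X_0,X_1)|^q\big)^{1/q}$ (sup if $q=\infty$), $K(t,f)=\inf_{f=f_0+f_1}(\|f_0\|_{X_0}+t\|f_1\|_{X_1})$, $a>0$ fixed. *)

theory Defs
  imports "HOL-Probability.Probability"
begin

text \<open>
  An element of L^p(Omega; H^s(O)) is represented by its coefficient field
  v :: 'w => nat => real, where v w k = (v(w), phi_k) for k >= 1 (index 0 unused).
  The eigenvalues of the Dirichlet Laplacian are lam 1, lam 2, ... (lam 0 unused).
  Norms take values in ennreal (infinity = not in the space).
\<close>

definition epow :: "ennreal \<Rightarrow> real \<Rightarrow> ennreal" where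
  "epow x r = (if x = \<infinity> then \<infinity> else ennreal (enn2real x powr r))"

definition Hdot_sq :: "(nat \<Rightarrow> real) \<Rightarrow> real \<Rightarrow> (nat \<Rightarrow> real) \<Rightarrow> ennreal" where
  "Hdot_sq lam s u = (\<Sum>k. ennreal (lam (Suc k) powr s * (u (Suc k))\<^sup>2))"

definition Hdot_norm :: "(nat \<Rightarrow> real) \<Rightarrow> real \<Rightarrow> (nat \<Rightarrow> real) \<Rightarrow> ennreal" where
  "Hdot_norm lam s u = epow (Hdot_sq lam s u) (1/2)"

definition ess_sup_enn :: "'w measure \<Rightarrow> ('w \<Rightarrow> ennreal) \<Rightarrow> ennreal" where
  "ess_sup_enn M g = Inf {c. AE w in M. g w \<le> c}"

definition LpH_norm :: "'w measure \<Rightarrow> (nat \<Rightarrow> real) \<Rightarrow> ennreal \<Rightarrow> real \<Rightarrow> ('w \<Rightarrow> nat \<Rightarrow> real) \<Rightarrow> ennreal" where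
  "LpH_norm M lam p s v =
     (if p = \<infinity> then ess_sup_enn M (\<lambda>w. Hdot_norm lam s (v w))
      else epow (\<integral>\<^sup>+ w. epow (Hdot_norm lam s (v w)) (enn2real p) \<partial>M) (1 / enn2real p))"

text \<open>Strong measurability: all coefficients are random variables (Pettis, H^s separable).\<close>
definition coeff_measurable :: "'w measure \<Rightarrow> ('w \<Rightarrow> nat \<Rightarrow> real) \<Rightarrow> bool" where
  "coeff_measurable M v \<longleftrightarrow> (\<forall>k. (\<lambda>w. v w k) \<in> borel_measurable M)"

definition LpH :: "'w measure \<Rightarrow> (nat \<Rightarrow> real) \<Rightarrow> ennreal \<Rightarrow> real \<Rightarrow> ('w \<Rightarrow> nat \<Rightarrow> real) set" where
  "LpH M lam p s = {v. coeff_measurable M v \<and> LpH_norm M lam p s v < \<infinity>}"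

definition Pi_dy :: "nat \<Rightarrow> ('w \<Rightarrow> nat \<Rightarrow> real) \<Rightarrow> ('w \<Rightarrow> nat \<Rightarrow> real)" where
  "Pi_dy j v = (\<lambda>w k. if 2 ^ (j - 1) \<le> k \<and> k < 2 ^ j then v w k else 0)"

definition BLpH_norm :: "'w measure \<Rightarrow> (nat \<Rightarrow> real) \<Rightarrow> ennreal \<Rightarrow> ennreal \<Rightarrow> real \<Rightarrow> ('w \<Rightarrow> nat \<Rightarrow> real) \<Rightarrow> ennreal" where
  "BLpH_norm M lam q p s v =
     (if q = \<infinity> then (SUP j\<in>{1..}. LpH_norm M lam p s (Pi_dy j v))
      else epow (\<Sum>j. epow (LpH_norm M lam p s (Pi_dy (Suc j) v)) (enn2real q)) (1 / enn2real q))"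

definition BLpH :: "'w measure \<Rightarrow> (nat \<Rightarrow> real) \<Rightarrow> ennreal \<Rightarrow> ennreal \<Rightarrow> real \<Rightarrow> ('w \<Rightarrow> nat \<Rightarrow> real) set" where
  "BLpH M lam q p s = {v \<in> LpH M lam p (-2). BLpH_norm M lam q p s v < \<infinity>}"

type_synonym 'v nspace = "'v set \<times> ('v \<Rightarrow> ennreal)"

definition K_fun :: "('w \<Rightarrow> nat \<Rightarrow> real) nspace \<Rightarrow> ('w \<Rightarrow> nat \<Rightarrow> real) nspace \<Rightarrow> real \<Rightarrow> ('w \<Rightarrow> nat \<Rightarrow> real) \<Rightarrow> ennreal" where
  "K_fun X0 X1 t f = (INF (f0, f1) \<in> {(f0, f1). f0 \<in> fst X0 \<and> f1 \<in> fst X1 \<and> f = (\<lambda>w k. f0 w k + f1 w k)}.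
                        snd X0 f0 + ennreal t * snd X1 f1)"

definition sum_space :: "('w \<Rightarrow> nat \<Rightarrow> real) nspace \<Rightarrow> ('w \<Rightarrow> nat \<Rightarrow> real) nspace \<Rightarrow> ('w \<Rightarrow> nat \<Rightarrow> real) set" where
  "sum_space X0 X1 = {f. \<exists>f0\<in>fst X0. \<exists>f1\<in>fst X1. f = (\<lambda>w k. f0 w k + f1 w k)}"

definition interp_norm :: "real \<Rightarrow> ('w \<Rightarrow> nat \<Rightarrow> real) nspace \<Rightarrow> ('w \<Rightarrow> nat \<Rightarrow> real) nspace \<Rightarrow> real \<Rightarrow> ennreal \<Rightarrow> ('w \<Rightarrow> nat \<Rightarrow> real) \<Rightarrow> ennreal" where
  "interp_norm a X0 X1 \<theta> q f =
     (if q = \<infinity> then (SUP j::int. ennreal (a powr (- real_of_int j * \<theta>)) * K_fun X0 X1 (a powr real_of_int j) f)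
      else epow (\<integral>\<^sup>+ j. epow (ennreal (a powr (- real_of_int j * \<theta>)) * K_fun X0 X1 (a powr real_of_int j) f) (enn2real q)
                   \<partial>count_space (UNIV :: int set)) (1 / enn2real q))"

definition interp_space :: "real \<Rightarrow> ('w \<Rightarrow> nat \<Rightarrow> real) nspace \<Rightarrow> ('w \<Rightarrow> nat \<Rightarrow> real) nspace \<Rightarrow> real \<Rightarrow> ennreal \<Rightarrow> ('w \<Rightarrow> nat \<Rightarrow> real) nspace" where
  "interp_space a X0 X1 \<theta> q =
     ({f \<in> sum_space X0 X1. interp_norm a X0 X1 \<theta> q f < \<infinity>}, interp_norm a X0 X1 \<theta> q)"

definition equiv_spaces :: "'v nspace \<Rightarrow> 'v nspace \<Rightarrow> bool" where
  "equiv_spaces X Y \<longleftrightarrow> fst X = fst Y \<and>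
     (\<exists>c C. 0 < c \<and> 0 < C \<and> (\<forall>f\<in>fst X. ennreal c * snd X f \<le> snd Y f \<and> snd Y f \<le> ennreal C * snd X f))"

definition LpH_sp where "LpH_sp M lam p s = (LpH M lam p s, LpH_norm M lam p s)"
definition BLpH_sp where "BLpH_sp M lam q p s = (BLpH M lam q p s, BLpH_norm M lam q p s)"

text \<open>Standing assumptions on the eigenvalues of the Dirichlet Laplacian on a bounded domain
  of R^d: positive, nondecreasing, and Weyl's asymptotics lam_k ~ k^(2/d) (two-sided comparability).\<close>
definition dirichlet_eigenvalues :: "nat \<Rightarrow> (nat \<Rightarrow> real) \<Rightarrow> bool" where
  "dirichlet_eigenvalues d lam \<longleftrightarrow> d \<ge> 1 \<and> 0 < lam 1 \<and> (\<forall>k\<ge>1. lam k \<le> lam (Suc k)) \<and>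
     (\<exists>c C. 0 < c \<and> 0 < C \<and> (\<forall>k\<ge>1. c * real k powr (2 / real d) \<le> lam k \<and> lam k \<le> C * real k powr (2 / real d)))"

end

theory Submission
  imports Defs "HOL-Probability.Essential_Supremum"
begin

lemma epow_top[simp]: "epow top r = top" by (simp add: epow_def)

lemma epow_ennreal: "0 \<le> c \<Longrightarrow> epow (ennreal c) r = ennreal (c powr r)"
  by (simp add: epow_def)

lemma epow_zero[simp]: "r \<noteq> 0 \<Longrightarrow> epow 0 r = 0"
  by (simp add: epow_def)

lemma epow_one_exp[simp]: "epow x 1 = x"
  by (cases x) (auto simp: epow_def)

lemma epow_mono: assumes "x \<le> y" "0 \<le> r" shows "epow x r \<le> epow y r"
proof (cases "y = top")
  case False
  then obtain b where b: "y = ennreal b" "0 \<le> b" by (cases y) auto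
  with assms obtain a where a: "x = ennreal a" "0 \<le> a" "a \<le> b"
    by (cases x) (auto simp: top_unique)
  show ?thesis using a b assms by (simp add: epow_def powr_mono2 ennreal_leI)
qed simp

lemma epow_epow: assumes "0 < r" "0 < s" shows "epow (epow x r) s = epow x (r * s)"
  using assms by (cases x) (auto simp: epow_def powr_powr)

lemma epow_le_iff: assumes "0 < r" shows "epow x r \<le> y \<longleftrightarrow> x \<le> epow y (1/r)"
proof
  assume "epow x r \<le> y"
  then have "epow (epow x r) (1/r) \<le> epow y (1/r)" using assms by (intro epow_mono) auto
  then show "x \<le> epow y (1/r)" using assms by (simp add: epow_epow)
next
  assume "x \<le> epow y (1/r)"
  then have "epow x r \<le> epow (epow y (1/r)) r" using assms by (intro epow_mono) auto
  then show "epow x r \<le> y" using assms by (simp add: epow_epow)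
qed

lemma epow_mult: assumes "0 < r" shows "epow (x * y) r = epow x r * epow y r"
proof (cases "x = 0 \<or> y = 0")
  case True then show ?thesis using assms by auto
next
  case False
  then show ?thesis using assms
    by (cases x; cases y) (auto simp: epow_def ennreal_mult' ennreal_mult_top ennreal_top_mult powr_mult
       ennreal_mult[symmetric] simp del: ennreal_mult')
qed

lemma epow_SUP: assumes "0 < r" shows "epow (Sup A) r = Sup ((\<lambda>x. epow x r) ` A)"
proof (rule antisym)
  show "epow (Sup A) r \<le> Sup ((\<lambda>x. epow x r) ` A)"
    unfolding epow_le_iff[OF assms]
  proof (rule Sup_least)
    fix x assume "x \<in> A"
    then have "epow x r \<le> Sup ((\<lambda>x. epow x r) ` A)" by (intro SUP_upper)
    then show "x \<le> epow (Sup ((\<lambda>x. epow x r) ` A)) (1/r)" using assms by (simp add: epow_le_iff)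
  qed
  show "Sup ((\<lambda>x. epow x r) ` A) \<le> epow (Sup A) r"
    using assms by (intro SUP_least epow_mono Sup_upper) auto
qed

lemma epow_SUP': assumes "0 < r" shows "epow (SUP i\<in>I. f i) r = (SUP i\<in>I. epow (f i) r)"
  using epow_SUP[OF assms, of "f ` I"] by (simp add: image_image)

lemma epow_strict_mono: assumes "x < y" "0 < r" shows "epow x r < epow y r"
proof (rule ccontr)
  assume "\<not> epow x r < epow y r"
  then have "epow y r \<le> epow x r" by simp
  then have "y \<le> epow (epow x r) (1/r)" using assms by (simp add: epow_le_iff)
  then show False using assms by (simp add: epow_epow)
qed

lemma epow_less_top: "x < top \<Longrightarrow> epow x r < top"
  by (cases x) (auto simp: epow_def)

lemma epow_eq_top_iff: "epow x r = top \<longleftrightarrow> x = top"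
  by (cases x) (auto simp: epow_def)

lemma epow_power: "epow x (real (Suc n)) = x ^ Suc n"
proof (cases x)
  case (real r)
  then have "r powr real (Suc n) = r ^ Suc n"
    by (cases "r = 0") (auto simp: powr_realpow simp del: of_nat_Suc)
  then show ?thesis using real by (simp add: epow_def ennreal_power del: power_Suc)
qed (auto simp: epow_def power_eq_top_ennreal)

lemma epow_2: "epow x 2 = x * x"
  using epow_power[of x 1] by (simp add: power2_eq_square)

lemma epow_half_le_iff: "epow x (1/2) \<le> y \<longleftrightarrow> x \<le> y * y"
  using epow_le_iff[of "1/2" x y] by (simp add: epow_2)

lemma epow_add_ge: assumes "1 \<le> r" shows "epow x r + epow y r \<le> epow (x + y) r"
proof (cases "x = top \<or> y = top")
  case True then show ?thesis by (auto simp: epow_eq_top_iff)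
next
  case False
  then obtain a b where ab: "x = ennreal a" "y = ennreal b" "0 \<le> a" "0 \<le> b"
    by (cases x; cases y) auto
  have "a powr r + b powr r \<le> (a + b) powr r"
  proof (cases "a + b = 0")
    case True then have "a = 0" "b = 0" using ab by auto
    then show ?thesis using assms by auto
  next
    case False
    then have s: "a + b > 0" using ab by auto
    have "a powr r = (a + b) powr r * (a/(a+b)) powr r" using ab s by (simp add: powr_divide)
    also have "\<dots> \<le> (a + b) powr r * (a/(a+b)) powr 1"
      using ab s assms by (intro mult_left_mono powr_mono') auto
    finally have 1: "a powr r \<le> (a + b) powr r * (a/(a+b))" using ab s by simp
    have "b powr r = (a + b) powr r * (b/(a+b)) powr r" using ab s by (simp add: powr_divide)
    also have "\<dots> \<le> (a + b) powr r * (b/(a+b)) powr 1"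
      using ab s assms by (intro mult_left_mono powr_mono') auto
    finally have 2: "b powr r \<le> (a + b) powr r * (b/(a+b))" using ab s by simp
    have "(a + b) powr r * (a/(a+b)) + (a + b) powr r * (b/(a+b)) = (a+b) powr r"
      using s by (simp add: distrib_left[symmetric] add_divide_distrib[symmetric])
    with 1 2 show ?thesis by linarith
  qed
  then show ?thesis using ab by (simp add: epow_def ennreal_plus[symmetric] del: ennreal_plus)
qed


lemma epow_borel: "(\<lambda>x::ennreal. epow x r) \<in> borel_measurable borel"
proof -
  have "{top::ennreal} \<in> sets borel" by simp
  have "(\<lambda>x::ennreal. if x \<in> {top} then top else ennreal (enn2real x powr r)) \<in> borel_measurable borel"
    by (intro measurable_If_set) auto
  then show ?thesis by (simp add: epow_def[abs_def])
qed

lemma epow_measurable[measurable]: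
  "g \<in> borel_measurable M \<Longrightarrow> (\<lambda>w. epow (g w) r) \<in> borel_measurable M"
  using measurable_compose[OF _ epow_borel] by blast

definition Lpn :: "'w measure \<Rightarrow> ennreal \<Rightarrow> ('w \<Rightarrow> ennreal) \<Rightarrow> ennreal" where
  "Lpn M p g = (if p = top then ess_sup_enn M g
     else epow (\<integral>\<^sup>+ w. epow (g w) (enn2real p) \<partial>M) (1 / enn2real p))"

lemma ess_sup_enn_eq: "g \<in> borel_measurable M \<Longrightarrow> ess_sup_enn M g = esssup M g"
  by (simp add: ess_sup_enn_def esssup_eq_AE)

lemma ess_sup_enn_AE: "g \<in> borel_measurable M \<Longrightarrow> AE w in M. g w \<le> ess_sup_enn M g"
  using esssup_AE[of g M] by (simp add: ess_sup_enn_eq)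

lemma ess_sup_enn_le: "AE w in M. g w \<le> c \<Longrightarrow> ess_sup_enn M g \<le> c"
  unfolding ess_sup_enn_def by (rule Inf_lower) simp

lemma ess_sup_enn_mono: "AE w in M. g w \<le> g' w \<Longrightarrow> ess_sup_enn M g \<le> ess_sup_enn M g'"
  unfolding ess_sup_enn_def by (rule Inf_mono) (auto elim: AE_mp intro!: exI)

lemma p_real: assumes "1 \<le> p" "p \<noteq> top" shows "1 \<le> enn2real p" "0 < enn2real p"
proof -
  show "1 \<le> enn2real p" using assms
    using enn2real_mono[of 1 p] by (simp add: top.not_eq_extremum)
  then show "0 < enn2real p" by simp
qed

lemma Lpn_mono:
  assumes "AE w in M. g w \<le> g' w"
  shows "Lpn M p g \<le> Lpn M p g'"
proof (cases "p = top")
  case True then show ?thesis using assms by (simp add: Lpn_def ess_sup_enn_mono)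
next
  case False
  have "0 \<le> enn2real p" by simp
  then show ?thesis using False assms
    by (auto simp: Lpn_def intro!: epow_mono nn_integral_mono_AE elim!: AE_mp)
qed

lemma Lpn_zero[simp]: assumes "1 \<le> p" shows "Lpn M p (\<lambda>w. 0) = 0"
proof (cases "p = top")
  case True then show ?thesis
    using ess_sup_enn_le[where g="\<lambda>w. 0" and M=M and c=0] by (simp add: Lpn_def)
next
  case False
  then show ?thesis using p_real[OF assms False] by (simp add: Lpn_def)
qed

lemma Lpn_cmult:
  assumes "1 \<le> p" "g \<in> borel_measurable M" "0 \<le> c"
  shows "Lpn M p (\<lambda>w. ennreal c * g w) \<le> ennreal c * Lpn M p g"
proof (cases "p = top")
  case True
  have "AE w in M. ennreal c * g w \<le> ennreal c * ess_sup_enn M g"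
    using ess_sup_enn_AE[OF assms(2)] by eventually_elim (rule mult_left_mono, auto)
  then show ?thesis using True by (simp add: Lpn_def ess_sup_enn_le)
next
  case False
  note P = p_real[OF assms(1) False]
  have "(\<integral>\<^sup>+ w. epow (ennreal c * g w) (enn2real p) \<partial>M)
      = (\<integral>\<^sup>+ w. epow (ennreal c) (enn2real p) * epow (g w) (enn2real p) \<partial>M)"
    using P by (simp add: epow_mult)
  also have "\<dots> = epow (ennreal c) (enn2real p) * (\<integral>\<^sup>+ w. epow (g w) (enn2real p) \<partial>M)"
    using assms by (intro nn_integral_cmult) measurable
  finally show ?thesis using False P
    by (simp add: Lpn_def epow_mult epow_epow)
qed

lemma Lpn_cmult':
  assumes "1 \<le> p" "g \<in> borel_measurable M" "0 \<le> c" "AE w in M. f w \<le> ennreal c * g w"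
  shows "Lpn M p f \<le> ennreal c * Lpn M p g"
  using Lpn_mono[OF assms(4)] Lpn_cmult[OF assms(1-3)] by (rule order_trans)


lemma convex2:
  fixes x y l P :: real
  assumes "0 \<le> x" "0 \<le> y" "0 \<le> l" "l \<le> 1" "1 \<le> P"
  shows "(l*x + (1-l)*y) powr P \<le> l * x powr P + (1-l) * y powr P"
proof (cases "x = 0 \<or> y = 0")
  case True
  then show ?thesis
  proof
    assume x: "x = 0"
    have "((1-l)*y) powr P = (1-l) powr P * y powr P" using assms by (simp add: powr_mult)
    also have "\<dots> \<le> (1-l) powr 1 * y powr P"
      using assms by (intro mult_right_mono powr_mono') auto
    finally show ?thesis using x assms by simp
  next
    assume y: "y = 0"
    have "(l*x) powr P = l powr P * x powr P" using assms by (simp add: powr_mult)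
    also have "\<dots> \<le> l powr 1 * x powr P"
      using assms by (intro mult_right_mono powr_mono') auto
    finally show ?thesis using y assms by simp
  qed
next
  case False
  then have "x \<in> {0<..}" "y \<in> {0<..}" using assms by auto
  from convex_onD[OF powr_convex[OF assms(5)], of "1-l" x y, OF _ _ this] assms
  show ?thesis by (simp add: algebra_simps)
qed

lemma mink_real:
  fixes a b u v P :: real
  assumes "0 < a" "0 < b" "0 \<le> u" "0 \<le> v" "1 \<le> P"
  shows "(u+v) powr P \<le> (a+b) powr (P-1) * (a powr (1-P) * u powr P + b powr (1-P) * v powr P)"
proof -
  define l where "l = a/(a+b)"
  have l: "0 \<le> l" "l \<le> 1" "1 - l = b/(a+b)" using assms by (auto simp: l_def field_simps)
  have e1: "l*(u/a) = u/(a+b)" using assms by (simp add: l_def)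
  have e2: "(1-l)*(v/b) = v/(a+b)" using assms l(3) by simp
  have eq: "l*(u/a) + (1-l)*(v/b) = (u+v)/(a+b)" unfolding e1 e2 by (simp add: add_divide_distrib)
  have "((u+v)/(a+b)) powr P \<le> l * (u/a) powr P + (1-l) * (v/b) powr P"
    using convex2[of "u/a" "v/b" l P] assms l eq by auto
  then have "(a+b) powr P * ((u+v)/(a+b)) powr P \<le> (a+b) powr P * (l * (u/a) powr P + (1-l) * (v/b) powr P)"
    by (intro mult_left_mono) auto
  also have "(a+b) powr P * ((u+v)/(a+b)) powr P = (u+v) powr P"
    using assms by (simp add: powr_divide)
  also have "(a+b) powr P * (l * (u/a) powr P + (1-l) * (v/b) powr P)
     = (a+b) powr (P-1) * (a powr (1-P) * u powr P + b powr (1-P) * v powr P)"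
  proof -
    have 1: "(a+b) powr P = (a+b) powr (P-1) * (a+b)" using assms by (simp add: powr_diff)
    have 2: "a powr (1-P) = a / a powr P" using assms by (simp add: powr_diff)
    have 3: "b powr (1-P) = b / b powr P" using assms by (simp add: powr_diff)
    have g: "\<And>(z1::real) z2 z3 z4 z5. z2 \<noteq> 0 \<Longrightarrow> z4 \<noteq> 0 \<Longrightarrow> (z1*z2)*((z5/z2)*(z3/z4)) = z1*(z5/z4*z3)"
      by (simp add: field_simps)
    have "(a+b) powr P * (l * (u/a) powr P) = (a+b) powr (P-1) * (a powr (1-P) * u powr P)"
      unfolding 1 2 l_def using assms by (simp add: powr_divide g)
    moreover have "(a+b) powr P * ((1-l) * (v/b) powr P) = (a+b) powr (P-1) * (b powr (1-P) * v powr P)"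
      unfolding 1 3 l(3) using assms by (simp add: powr_divide g)
    ultimately show ?thesis by (simp add: distrib_left)
  qed
  finally show ?thesis .
qed

lemma mink_enn:
  fixes a b P :: real and u v :: ennreal
  assumes "0 < a" "0 < b" "1 \<le> P"
  shows "epow (u+v) P \<le> ennreal ((a+b) powr (P-1)) *
     (ennreal (a powr (1-P)) * epow u P + ennreal (b powr (1-P)) * epow v P)"
proof (cases "u = top \<or> v = top")
  case True then show ?thesis using assms
    by (auto simp: ennreal_mult_top ennreal_top_mult)
next
  case False
  then obtain x y where xy: "u = ennreal x" "v = ennreal y" "0 \<le> x" "0 \<le> y" by (cases u; cases v) auto
  have "(x+y) powr P \<le> (a+b) powr (P-1) * (a powr (1-P) * x powr P + b powr (1-P) * y powr P)"
    using mink_real[of a b x y P] assms xy by auto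
  then show ?thesis using xy assms
    by (simp add: epow_def ennreal_mult'[symmetric] ennreal_plus[symmetric] ennreal_leI del: ennreal_plus)
qed


lemma epow_eq_0_iff: "0 < r \<Longrightarrow> epow x r = 0 \<longleftrightarrow> x = 0"
  by (cases x) (auto simp: epow_def)

lemma Lpn_add:
  assumes p: "1 \<le> p" and g1: "g1 \<in> borel_measurable M" and g2: "g2 \<in> borel_measurable M"
  shows "Lpn M p (\<lambda>w. g1 w + g2 w) \<le> Lpn M p g1 + Lpn M p g2"
proof (cases "p = top")
  case True
  have "AE w in M. g1 w + g2 w \<le> ess_sup_enn M g1 + ess_sup_enn M g2"
    using ess_sup_enn_AE[OF g1] ess_sup_enn_AE[OF g2] by eventually_elim (rule add_mono)
  then show ?thesis using True by (simp add: Lpn_def ess_sup_enn_le)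
next
  case False
  note P = p_real[OF p False]
  define P where "P = enn2real p"
  have P1: "1 \<le> P" "0 < P" using P by (auto simp: P_def)
  define I1 where "I1 = (\<integral>\<^sup>+ w. epow (g1 w) P \<partial>M)"
  define I2 where "I2 = (\<integral>\<^sup>+ w. epow (g2 w) P \<partial>M)"
  have L1: "Lpn M p g1 = epow I1 (1/P)" and L2: "Lpn M p g2 = epow I2 (1/P)"
    and L: "Lpn M p (\<lambda>w. g1 w + g2 w) = epow (\<integral>\<^sup>+ w. epow (g1 w + g2 w) P \<partial>M) (1/P)"
    using False by (simp_all add: Lpn_def I1_def I2_def P_def)
  show ?thesis
  proof (cases "I1 = top \<or> I2 = top")
    case True then show ?thesis unfolding L1 L2 by (auto simp: epow_eq_top_iff)
  next
    case nt: False
    show ?thesis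
    proof (cases "I1 = 0 \<or> I2 = 0")
      case True
      then show ?thesis
      proof
        assume "I1 = 0"
        then have "AE w in M. epow (g1 w) P = 0" unfolding I1_def
          using g1 by (subst (asm) nn_integral_0_iff_AE) auto
        then have "AE w in M. g1 w = 0" using P1 by (simp add: epow_eq_0_iff)
        then have "Lpn M p (\<lambda>w. g1 w + g2 w) \<le> Lpn M p g2"
          by (intro Lpn_mono) (auto elim: AE_mp)
        then show ?thesis by (simp add: add_increasing)
      next
        assume "I2 = 0"
        then have "AE w in M. epow (g2 w) P = 0" unfolding I2_def
          using g2 by (subst (asm) nn_integral_0_iff_AE) auto
        then have "AE w in M. g2 w = 0" using P1 by (simp add: epow_eq_0_iff)
        then have "Lpn M p (\<lambda>w. g1 w + g2 w) \<le> Lpn M p g1"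
          by (intro Lpn_mono) (auto elim: AE_mp)
        then show ?thesis by (simp add: add_increasing2)
      qed
    next
      case nz: False
      obtain A where A: "I1 = ennreal A" "0 < A" using nt nz by (cases I1) (auto simp: less_le)
      obtain B where B: "I2 = ennreal B" "0 < B" using nt nz by (cases I2) (auto simp: less_le)
      define a where "a = A powr (1/P)"
      define b where "b = B powr (1/P)"
      have ab: "0 < a" "0 < b" using A B by (auto simp: a_def b_def)
      have Aa: "A = a powr P" "B = b powr P" using A B P1 by (auto simp: a_def b_def powr_powr)
      have "(\<integral>\<^sup>+ w. epow (g1 w + g2 w) P \<partial>M) \<le> (\<integral>\<^sup>+ w. ennreal ((a+b) powr (P-1)) *
          (ennreal (a powr (1-P)) * epow (g1 w) P + ennreal (b powr (1-P)) * epow (g2 w) P) \<partial>M)"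
        using ab P1 by (intro nn_integral_mono mink_enn) auto
      also have "\<dots> = ennreal ((a+b) powr (P-1)) *
          (ennreal (a powr (1-P)) * I1 + ennreal (b powr (1-P)) * I2)"
        unfolding I1_def I2_def using g1 g2
        by (simp add: nn_integral_cmult nn_integral_add)
      also have "\<dots> = ennreal ((a+b) powr (P-1) * (a powr (1-P) * a powr P + b powr (1-P) * b powr P))"
        using A B Aa ab by (simp add: ennreal_mult'[symmetric] ennreal_plus[symmetric] del: ennreal_plus)
      also have "(a+b) powr (P-1) * (a powr (1-P) * a powr P + b powr (1-P) * b powr P) = (a+b) powr P"
      proof -
        have "(a+b) powr (P-1) * (a+b) = (a+b) powr (P-1) * (a+b) powr 1" using ab by simp
        also have "\<dots> = (a+b) powr (P - 1 + 1)" by (rule powr_add[symmetric])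
        finally show ?thesis using ab by (simp add: powr_add[symmetric])
      qed
      finally have "(\<integral>\<^sup>+ w. epow (g1 w + g2 w) P \<partial>M) \<le> ennreal ((a+b) powr P)" .
      then have "Lpn M p (\<lambda>w. g1 w + g2 w) \<le> epow (ennreal ((a+b) powr P)) (1/P)"
        unfolding L using P1 by (intro epow_mono) auto
      also have "\<dots> = ennreal (a + b)" using ab P1 by (simp add: epow_ennreal powr_powr)
      also have "\<dots> = Lpn M p g1 + Lpn M p g2"
        unfolding L1 L2 A B using ab A B by (simp add: epow_ennreal a_def b_def)
      finally show ?thesis .
    qed
  qed
qed

lemma Lpn_sum:
  fixes n :: nat
  assumes p: "1 \<le> p" and g: "\<And>i. g i \<in> borel_measurable M"
  shows "Lpn M p (\<lambda>w. \<Sum>i<n. g i w) \<le> (\<Sum>i<n. Lpn M p (g i))"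
proof (induction n)
  case 0 then show ?case using p by simp
next
  case (Suc n)
  have "Lpn M p (\<lambda>w. \<Sum>i<Suc n. g i w) = Lpn M p (\<lambda>w. (\<Sum>i<n. g i w) + g n w)" by simp
  also have "\<dots> \<le> Lpn M p (\<lambda>w. \<Sum>i<n. g i w) + Lpn M p (g n)"
    using g by (intro Lpn_add p) auto
  also have "\<dots> \<le> (\<Sum>i<n. Lpn M p (g i)) + Lpn M p (g n)" using Suc by (intro add_mono) auto
  finally show ?case by simp
qed

lemma Lpn_suminf:
  assumes p: "1 \<le> p" and g: "\<And>i. g i \<in> borel_measurable M"
  shows "Lpn M p (\<lambda>w. \<Sum>i. g i w) \<le> (\<Sum>i. Lpn M p (g i))"
proof (cases "p = top")
  case True
  have "AE w in M. \<forall>i. g i w \<le> ess_sup_enn M (g i)"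
    using g by (intro AE_all_countable[THEN iffD2] allI ess_sup_enn_AE)
  then have "AE w in M. (\<Sum>i. g i w) \<le> (\<Sum>i. ess_sup_enn M (g i))"
    by eventually_elim (intro suminf_le summableI, auto)
  then show ?thesis using True by (simp add: Lpn_def ess_sup_enn_le)
next
  case False
  note P = p_real[OF p False]
  define S where "S n w = (\<Sum>i<n. g i w)" for n w
  have Sm: "S n \<in> borel_measurable M" for n unfolding S_def using g by measurable
  have inc: "incseq (\<lambda>n. epow (S n w) (enn2real p))" for w
    by (intro incseq_SucI epow_mono) (auto simp: S_def)
  have sum_eq: "(\<Sum>i. g i w) = (SUP n. S n w)" for w unfolding S_def by (rule suminf_eq_SUP)
  have "Lpn M p (\<lambda>w. \<Sum>i. g i w) = epow (\<integral>\<^sup>+ w. (SUP n. epow (S n w) (enn2real p)) \<partial>M) (1 / enn2real p)"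
    using False P by (simp add: Lpn_def sum_eq epow_SUP')
  also have "\<dots> = epow (SUP n. \<integral>\<^sup>+ w. epow (S n w) (enn2real p) \<partial>M) (1 / enn2real p)"
    using inc Sm by (subst nn_integral_monotone_convergence_SUP) (auto simp: incseq_def le_fun_def)
  also have "\<dots> = (SUP n. Lpn M p (S n))"
    using False P by (simp add: Lpn_def epow_SUP')
  also have "\<dots> \<le> (\<Sum>i. Lpn M p (g i))"
  proof (rule SUP_least)
    fix n
    have "Lpn M p (S n) \<le> (\<Sum>i<n. Lpn M p (g i))" unfolding S_def by (rule Lpn_sum[OF p g])
    also have "\<dots> \<le> (\<Sum>i. Lpn M p (g i))" by (intro sum_le_suminf summableI) auto
    finally show "Lpn M p (S n) \<le> (\<Sum>i. Lpn M p (g i))" .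
  qed
  finally show ?thesis .
qed


definition blk :: "nat \<Rightarrow> (nat \<Rightarrow> real) \<Rightarrow> (nat \<Rightarrow> real)" where
  "blk j u = (\<lambda>k. if 2 ^ (j - 1) \<le> k \<and> k < 2 ^ j then u k else 0)"

lemma Pi_dy_blk: "Pi_dy j v w = blk j (v w)"
  by (simp add: Pi_dy_def blk_def)

definition hw :: "(nat \<Rightarrow> real) \<Rightarrow> real \<Rightarrow> (nat \<Rightarrow> real) \<Rightarrow> nat \<Rightarrow> ennreal" where
  "hw lam s u k = ennreal (sqrt (lam (Suc k) powr s) * \<bar>u (Suc k)\<bar>)"

lemma Hdot_Lpn: "Hdot_norm lam s u = Lpn (count_space UNIV) 2 (hw lam s u)"
proof -
  have "epow (hw lam s u k) 2 = ennreal (lam (Suc k) powr s * (u (Suc k))\<^sup>2)" for k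
  proof -
    have "sqrt (lam (Suc k) powr s) * \<bar>u (Suc k)\<bar> * (sqrt (lam (Suc k) powr s) * \<bar>u (Suc k)\<bar>)
        = lam (Suc k) powr s * (u (Suc k))\<^sup>2"
      by (simp add: algebra_simps power2_eq_square)
    then show ?thesis by (simp add: hw_def epow_2 ennreal_mult'[symmetric])
  qed
  then show ?thesis
    by (simp add: Hdot_norm_def Hdot_sq_def Lpn_def nn_integral_count_space_nat)
qed

lemma hw_add_le: "hw lam s (\<lambda>k. u k + v k) k \<le> hw lam s u k + hw lam s v k"
proof -
  have "sqrt (lam (Suc k) powr s) * \<bar>u (Suc k) + v (Suc k)\<bar>
     \<le> sqrt (lam (Suc k) powr s) * \<bar>u (Suc k)\<bar> + sqrt (lam (Suc k) powr s) * \<bar>v (Suc k)\<bar>"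
    by (simp add: distrib_left[symmetric] mult_left_mono abs_triangle_ineq)
  then show ?thesis by (simp add: hw_def ennreal_plus[symmetric] ennreal_leI del: ennreal_plus)
qed

lemma Hdot_add: "Hdot_norm lam s (\<lambda>k. u k + v k) \<le> Hdot_norm lam s u + Hdot_norm lam s v"
proof -
  have "Lpn (count_space UNIV) 2 (hw lam s (\<lambda>k. u k + v k))
      \<le> Lpn (count_space UNIV) 2 (\<lambda>k. hw lam s u k + hw lam s v k)"
    by (intro Lpn_mono AE_I2 hw_add_le)
  also have "\<dots> \<le> Lpn (count_space UNIV) 2 (hw lam s u) + Lpn (count_space UNIV) 2 (hw lam s v)"
    by (intro Lpn_add) auto
  finally show ?thesis by (simp add: Hdot_Lpn)
qed

lemma Hdot_mono:
  assumes "\<And>k. k \<ge> 1 \<Longrightarrow> \<bar>u k\<bar> \<le> \<bar>v k\<bar>"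
  shows "Hdot_norm lam s u \<le> Hdot_norm lam s v"
proof -
  have "hw lam s u k \<le> hw lam s v k" for k
    using assms[of "Suc k"] by (simp add: hw_def ennreal_leI mult_left_mono)
  then show ?thesis unfolding Hdot_Lpn by (intro Lpn_mono AE_I2) auto
qed

lemma Hdot_blk_le: "Hdot_norm lam s (blk j u) \<le> Hdot_norm lam s u"
  by (rule Hdot_mono) (simp add: blk_def)

lemma blk_exists: "k \<ge> 1 \<Longrightarrow> \<exists>j. 2 ^ (j - 1) \<le> k \<and> k < (2::nat) ^ j"
proof -
  assume k: "k \<ge> 1"
  define j where "j = (LEAST j. k < (2::nat) ^ j)"
  have ex: "\<exists>j. k < (2::nat) ^ j" by (intro exI[of _ k] less_exp)
  have 1: "k < 2 ^ j" unfolding j_def by (rule LeastI_ex[OF ex])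
  have "j \<noteq> 0" using 1 k by (cases j) auto
  then have "\<not> k < 2 ^ (j - 1)" unfolding j_def
    by (metis diff_less j_def not_less_Least zero_less_one gr0I)
  then show ?thesis using 1 by (intro exI[of _ j]) auto
qed

lemma Hdot_le_sum_blk: "Hdot_norm lam s u \<le> (\<Sum>j. Hdot_norm lam s (blk j u))"
proof -
  have "hw lam s u k \<le> (\<Sum>j. hw lam s (blk j u) k)" for k
  proof -
    obtain j where j: "2 ^ (j - 1) \<le> Suc k" "Suc k < (2::nat) ^ j" using blk_exists[of "Suc k"] by auto
    have "hw lam s u k = hw lam s (blk j u) k" using j by (simp add: hw_def blk_def)
    also have "\<dots> = (\<Sum>i\<in>{j}. hw lam s (blk i u) k)" by simp
    also have "\<dots> \<le> (\<Sum>i. hw lam s (blk i u) k)" by (intro sum_le_suminf summableI) auto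
    finally show ?thesis .
  qed
  then have "Lpn (count_space UNIV) 2 (hw lam s u) \<le> Lpn (count_space UNIV) 2 (\<lambda>k. \<Sum>j. hw lam s (blk j u) k)"
    by (intro Lpn_mono AE_I2) auto
  also have "\<dots> \<le> (\<Sum>j. Lpn (count_space UNIV) 2 (hw lam s (blk j u)))"
    by (intro Lpn_suminf) auto
  finally show ?thesis by (simp add: Hdot_Lpn)
qed

lemma Hdot_cmult:
  assumes "0 \<le> E" "\<And>k. k \<ge> 1 \<Longrightarrow> u k \<noteq> 0 \<Longrightarrow> sqrt (lam k powr s) \<le> E * sqrt (lam k powr s')"
  shows "Hdot_norm lam s u \<le> ennreal E * Hdot_norm lam s' u"
proof -
  have "hw lam s u k \<le> ennreal E * hw lam s' u k" for k
  proof (cases "u (Suc k) = 0")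
    case False
    have "sqrt (lam (Suc k) powr s) * \<bar>u (Suc k)\<bar> \<le> E * sqrt (lam (Suc k) powr s') * \<bar>u (Suc k)\<bar>"
      using assms(2)[of "Suc k"] False by (intro mult_right_mono) auto
    then show ?thesis using assms(1) by (simp add: hw_def ennreal_mult'[symmetric] ennreal_leI mult.assoc)
  qed (simp add: hw_def)
  then show ?thesis unfolding Hdot_Lpn by (intro Lpn_cmult' AE_I2) (auto simp: assms)
qed

lemma Hdot_measurable[measurable]:
  assumes "coeff_measurable M v"
  shows "(\<lambda>w. Hdot_norm lam s (v w)) \<in> borel_measurable M"
proof -
  have [measurable]: "(\<lambda>w. v w k) \<in> borel_measurable M" for k using assms by (simp add: coeff_measurable_def)
  show ?thesis unfolding Hdot_norm_def Hdot_sq_def by measurable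
qed

lemma LpH_norm_Lpn: "LpH_norm M lam p s v = Lpn M p (\<lambda>w. Hdot_norm lam s (v w))"
  by (simp add: LpH_norm_def Lpn_def)


lemma powr_between:
  fixes m1 m2 mu r :: real
  assumes "0 < m1" "m1 \<le> mu" "mu \<le> m2"
  shows "mu powr r \<le> max (m1 powr r) (m2 powr r)"
proof (cases "0 \<le> r")
  case True then have "mu powr r \<le> m2 powr r" using assms by (intro powr_mono2) auto
  then show ?thesis by simp
next
  case False then have "mu powr r \<le> m1 powr r" using assms by (intro powr_mono2') auto
  then show ?thesis by simp
qed

lemma sqrt_powr: "0 < x \<Longrightarrow> sqrt (x powr s) = x powr (s/2)"
  by (simp add: powr_half_sqrt[symmetric] powr_powr)

locale weyl =
  fixes lam :: "nat \<Rightarrow> real" and d :: nat and c0 C0 :: real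
  assumes d1: "1 \<le> d" and lam1: "0 < lam 1" and lmono: "\<And>k. k \<ge> 1 \<Longrightarrow> lam k \<le> lam (Suc k)"
    and c0: "0 < c0" and C0: "0 < C0"
    and weyl: "\<And>k. k \<ge> 1 \<Longrightarrow> c0 * real k powr (2/real d) \<le> lam k \<and> lam k \<le> C0 * real k powr (2/real d)"
begin

definition G :: real where "G = 2 powr (1 / real d)"

lemma G_gt1: "1 < G"
  using d1 unfolding G_def by (intro gr_one_powr) auto

definition Kc :: "real \<Rightarrow> real" where
  "Kc t = max ((c0 * G powr (-2)) powr (t/2)) (C0 powr (t/2))"

lemma Kc_pos: "0 < Kc t"
  using C0 by (simp add: Kc_def less_max_iff_disj)

lemma lam_ge1: "k \<ge> 1 \<Longrightarrow> lam 1 \<le> lam k"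
proof (induction k rule: dec_induct)
  case (step n) then show ?case using lmono[of n] by simp
qed simp

lemma lam_pos: "k \<ge> 1 \<Longrightarrow> 0 < lam k"
  using lam_ge1 lam1 by (meson less_le_trans)

lemma lam_block:
  assumes j: "j \<ge> 1" and k: "2 ^ (j - 1) \<le> k" "k < (2::nat) ^ j"
  shows "c0 * G powr (-2) \<le> lam k / G powr (2 * real j)" "lam k / G powr (2 * real j) \<le> C0"
proof -
  have k1: "k \<ge> 1" using k(1) by (metis one_le_numeral one_le_power order_trans)
  have G: "0 < G" using G_gt1 by simp
  have kp: "G powr (2 * real (j - 1)) \<le> real k powr (2 / real d)"
  proof -
    have "G powr (2 * real (j - 1)) = (real (2 ^ (j - 1))) powr (2 / real d)"
      unfolding G_def by (simp add: powr_powr powr_realpow[symmetric] algebra_simps)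
    also have "\<dots> \<le> real k powr (2 / real d)" using k by (intro powr_mono2) auto
    finally show ?thesis .
  qed
  have kp2: "real k powr (2 / real d) \<le> G powr (2 * real j)"
  proof -
    have "real k powr (2 / real d) \<le> (real (2 ^ j)) powr (2 / real d)"
      using k k1 by (intro powr_mono2) auto
    also have "\<dots> = G powr (2 * real j)"
      unfolding G_def by (simp add: powr_powr powr_realpow[symmetric] algebra_simps)
    finally show ?thesis .
  qed
  have "G powr (2 * real j) = G powr 2 * G powr (2 * real (j - 1))"
    using j by (simp add: powr_add[symmetric] algebra_simps of_nat_diff)
  then have "c0 * G powr (-2) * G powr (2 * real j) = c0 * G powr (2 * real (j - 1))"
    using G by (simp add: powr_minus field_simps)
  also have "\<dots> \<le> c0 * real k powr (2 / real d)" using kp c0 by simp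
  also have "\<dots> \<le> lam k" using weyl[OF k1] by simp
  finally show "c0 * G powr (-2) \<le> lam k / G powr (2 * real j)" using G by (simp add: field_simps)
  have "lam k \<le> C0 * real k powr (2 / real d)" using weyl[OF k1] by simp
  also have "\<dots> \<le> C0 * G powr (2 * real j)" using kp2 C0 by simp
  finally show "lam k / G powr (2 * real j) \<le> C0" using G by (simp add: field_simps)
qed

lemma ratio_block:
  assumes j: "j \<ge> 1" and k: "2 ^ (j - 1) \<le> k" "k < (2::nat) ^ j"
  shows "sqrt (lam k powr s) \<le> (Kc (s - s') * G powr (real j * (s - s'))) * sqrt (lam k powr s')"
proof -
  have k1: "k \<ge> 1" using k(1) by (metis one_le_numeral one_le_power order_trans)
  have lp: "0 < lam k" using lam_pos[OF k1] .
  have G: "0 < G" using G_gt1 by simp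
  define mu where "mu = lam k / G powr (2 * real j)"
  have mu: "c0 * G powr (-2) \<le> mu" "mu \<le> C0" using lam_block[OF assms] by (auto simp: mu_def)
  have lmu: "lam k = G powr (2 * real j) * mu" using G by (simp add: mu_def)
  have mp: "0 < mu" using mu c0 G by (smt (verit) mult_pos_pos powr_gt_zero)
  have "sqrt (lam k powr s) = lam k powr ((s - s')/2) * sqrt (lam k powr s')"
    using lp by (simp add: sqrt_powr powr_add[symmetric] diff_divide_distrib)
  also have "lam k powr ((s - s')/2) = G powr (real j * (s - s')) * mu powr ((s - s')/2)"
    unfolding lmu using G mp by (simp add: powr_mult powr_powr)
  also have "mu powr ((s - s')/2) \<le> Kc (s - s')"
    unfolding Kc_def using mu c0 G by (intro powr_between) auto
  finally show ?thesis using G by (simp add: mult_right_mono mult_left_mono mult.assoc mult.left_commute)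
qed

lemma Hdot_blk_scale:
  assumes j: "j \<ge> 1"
  shows "Hdot_norm lam s (blk j u) \<le> ennreal (Kc (s - s') * G powr (real j * (s - s'))) * Hdot_norm lam s' (blk j u)"
proof (rule Hdot_cmult)
  show "0 \<le> Kc (s - s') * G powr (real j * (s - s'))" using Kc_pos[of "s-s'"] by simp
  fix k assume "k \<ge> 1" "blk j u k \<noteq> 0"
  then have "2 ^ (j - 1) \<le> k" "k < (2::nat) ^ j" by (auto simp: blk_def split: if_splits)
  then show "sqrt (lam k powr s) \<le> (Kc (s - s') * G powr (real j * (s - s'))) * sqrt (lam k powr s')"
    using ratio_block[OF j] by blast
qed

lemma Hdot_neg2:
  assumes "-2 \<le> s"
  shows "Hdot_norm lam (-2) u \<le> ennreal (lam 1 powr ((-2 - s)/2)) * Hdot_norm lam s u"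
proof (rule Hdot_cmult)
  show "0 \<le> lam 1 powr ((-2 - s)/2)" by simp
  fix k :: nat assume k: "k \<ge> 1"
  have lp: "0 < lam k" using lam_pos[OF k] .
  have "sqrt (lam k powr (-2)) = lam k powr ((-2 - s)/2) * sqrt (lam k powr s)"
    using lp by (simp add: sqrt_powr powr_add[symmetric] diff_divide_distrib)
  also have "\<dots> \<le> lam 1 powr ((-2 - s)/2) * sqrt (lam k powr s)"
    using assms lam1 lam_ge1[OF k] by (intro mult_right_mono powr_mono2') auto
  finally show "sqrt (lam k powr (-2)) \<le> lam 1 powr ((-2 - s)/2) * sqrt (lam k powr s)" .
qed

end


lemma ess_sup_count: "ess_sup_enn (count_space A) g = (SUP a\<in>A. g a)"
proof -
  have "{c. AE w in count_space A. g w \<le> c} = {c. \<forall>a\<in>A. g a \<le> c}"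
    by (simp add: AE_count_space)
  then show ?thesis unfolding ess_sup_enn_def
    by (auto intro!: antisym Inf_lower SUP_upper Inf_greatest SUP_least)
qed

lemma Lpn_count_top: "Lpn (count_space A) top g = (SUP a\<in>A. g a)"
  by (simp add: Lpn_def ess_sup_count)

lemma Lpn_pullback:
  assumes q: "1 \<le> q" and inj: "inj_on \<sigma> S"
  shows "Lpn (count_space UNIV) q (\<lambda>a. if a \<in> S then h (\<sigma> a) else 0) \<le> Lpn (count_space UNIV) q h"
proof (cases "q = top")
  case True
  show ?thesis unfolding True Lpn_count_top
    by (rule SUP_least) (auto intro: SUP_upper)
next
  case False
  note P = p_real[OF q False]
  have "(\<integral>\<^sup>+ a. epow (if a \<in> S then h (\<sigma> a) else 0) (enn2real q) \<partial>count_space UNIV)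
      = (\<integral>\<^sup>+ a. epow (h (\<sigma> a)) (enn2real q) * indicator S a \<partial>count_space UNIV)"
    using P by (intro nn_integral_cong) (auto simp: indicator_def)
  also have "\<dots> = (\<integral>\<^sup>+ a. epow (h (\<sigma> a)) (enn2real q) \<partial>count_space S)"
    by (cases "S = UNIV") (simp_all add: nn_integral_count_space_indicator)
  also have "\<dots> = (\<integral>\<^sup>+ b. epow (h b) (enn2real q) \<partial>count_space (\<sigma> ` S))"
    using inj by (intro nn_integral_bij_count_space) (simp add: bij_betw_def)
  also have "\<dots> \<le> (\<integral>\<^sup>+ b. epow (h b) (enn2real q) \<partial>count_space UNIV)"
  proof (cases "\<sigma> ` S = UNIV")
    case False
    have "(\<integral>\<^sup>+ b. epow (h b) (enn2real q) \<partial>count_space (\<sigma> ` S))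
       = (\<integral>\<^sup>+ b. epow (h b) (enn2real q) * indicator (\<sigma> ` S) b \<partial>count_space UNIV)"
      using False by (simp add: nn_integral_count_space_indicator)
    also have "\<dots> \<le> (\<integral>\<^sup>+ b. epow (h b) (enn2real q) \<partial>count_space UNIV)"
      by (intro nn_integral_mono) (simp add: indicator_def)
    finally show ?thesis .
  qed simp
  finally show ?thesis using False P by (simp add: Lpn_def epow_mono)
qed

lemma Lpn_bij:
  assumes q: "1 \<le> q" and b: "bij \<sigma>"
  shows "Lpn (count_space UNIV) q (\<lambda>a. h (\<sigma> a)) = Lpn (count_space UNIV) q h"
proof (rule antisym)
  show "Lpn (count_space UNIV) q (\<lambda>a. h (\<sigma> a)) \<le> Lpn (count_space UNIV) q h"
    using Lpn_pullback[OF q, of \<sigma> UNIV h] b by (simp add: bij_def)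
  have "Lpn (count_space UNIV) q h = Lpn (count_space UNIV) q (\<lambda>a. (\<lambda>a. h (\<sigma> a)) (inv \<sigma> a))"
    using b by (simp add: bij_inv_eq_iff surj_f_inv_f bij_is_surj)
  also have "\<dots> \<le> Lpn (count_space UNIV) q (\<lambda>a. h (\<sigma> a))"
    using Lpn_pullback[OF q, of "inv \<sigma>" UNIV "\<lambda>a. h (\<sigma> a)"] b
    by (simp add: bij_imp_bij_inv bij_is_inj)
  finally show "Lpn (count_space UNIV) q h \<le> Lpn (count_space UNIV) q (\<lambda>a. h (\<sigma> a))" .
qed

lemma nn_integral_int_nat:
  fixes G :: "int \<Rightarrow> ennreal"
  shows "(\<integral>\<^sup>+ z. G z \<partial>count_space UNIV) = (\<Sum>i. G (from_nat_into (UNIV::int set) i))"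
proof -
  have b: "bij_betw (from_nat_into (UNIV::int set)) UNIV UNIV"
    by (intro bij_betw_from_nat_into) auto
  show ?thesis
    by (simp add: nn_integral_bij_count_space[OF b, symmetric] nn_integral_count_space_nat)
qed

lemma Lpn_suminf_int:
  fixes g :: "int \<Rightarrow> 'w \<Rightarrow> ennreal"
  assumes p: "1 \<le> p" and g: "\<And>z. g z \<in> borel_measurable M"
  shows "Lpn M p (\<lambda>w. \<integral>\<^sup>+ z. g z w \<partial>count_space UNIV) \<le> (\<integral>\<^sup>+ z. Lpn M p (g z) \<partial>count_space UNIV)"
  unfolding nn_integral_int_nat using g by (intro Lpn_suminf p) auto

lemma sum_mod_split: "(L::nat) \<ge> 1 \<Longrightarrow> (\<Sum>r<L. if j mod L = r then (v::ennreal) else 0) = v"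
  by (simp add: sum.delta)

lemma Lpn_pull_fiber:
  fixes \<sigma> :: "nat \<Rightarrow> 'b" and L :: nat
  assumes q: "1 \<le> q" and L: "L \<ge> 1" and inj: "\<And>r. r < L \<Longrightarrow> inj_on \<sigma> {j. j mod L = r}"
  shows "Lpn (count_space UNIV) q (\<lambda>j. h (\<sigma> j)) \<le> of_nat L * Lpn (count_space UNIV) q h"
proof -
  have "Lpn (count_space UNIV) q (\<lambda>j. h (\<sigma> j))
      = Lpn (count_space UNIV) q (\<lambda>j. \<Sum>r<L. (if j \<in> {j. j mod L = r} then h (\<sigma> j) else 0))"
    using L by (simp add: sum_mod_split)
  also have "\<dots> \<le> (\<Sum>r<L. Lpn (count_space UNIV) q (\<lambda>j. if j \<in> {j. j mod L = r} then h (\<sigma> j) else 0))"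
    by (rule Lpn_sum[OF q]) simp
  also have "\<dots> \<le> (\<Sum>r<L. Lpn (count_space UNIV) q h)"
    by (intro sum_mono Lpn_pullback[OF q] inj) auto
  finally show ?thesis by simp
qed

lemma Lpn_push_fiber:
  fixes n :: "nat \<Rightarrow> 'b" and x :: "nat \<Rightarrow> ennreal" and L :: nat
  assumes q: "1 \<le> q" and L: "L \<ge> 1" and inj: "\<And>r. r < L \<Longrightarrow> inj_on n {j. j mod L = r}"
  shows "Lpn (count_space UNIV) q (\<lambda>l. \<Sum>j. if n j = l then x j else 0) \<le> of_nat L * Lpn (count_space UNIV) q x"
proof -
  define S where "S r = {j. j mod L = r}" for r
  have one: "(\<Sum>j. if n j = l \<and> j \<in> S r then x j else 0)
     = (if l \<in> n ` S r then x (inv_into (S r) n l) else 0)" if r: "r < L" for l r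
  proof (cases "l \<in> n ` S r")
    case True
    define j0 where "j0 = inv_into (S r) n l"
    have j0: "j0 \<in> S r" "n j0 = l" using True by (auto simp: j0_def inv_into_into f_inv_into_f)
    have "(\<lambda>j. if n j = l \<and> j \<in> S r then x j else 0) = (\<lambda>j. if j = j0 then x j else 0)"
    proof
      fix j show "(if n j = l \<and> j \<in> S r then x j else 0) = (if j = j0 then x j else 0)"
        using inj[OF r] j0 unfolding S_def by (auto simp: inj_on_def)
    qed
    then show ?thesis using True sums_single[of j0 x] by (simp add: sums_iff j0_def)
  next
    case False
    then have "(\<lambda>j. if n j = l \<and> j \<in> S r then x j else 0) = (\<lambda>j. 0)" by (intro ext) (auto simp: image_iff)
    then show ?thesis using False by simp
  qed
  have "Lpn (count_space UNIV) q (\<lambda>l. \<Sum>j. if n j = l then x j else 0)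
      = Lpn (count_space UNIV) q (\<lambda>l. \<Sum>r<L. (if l \<in> n ` S r then x (inv_into (S r) n l) else 0))"
  proof -
    have "(\<Sum>j. if n j = l then x j else 0) = (\<Sum>r<L. (if l \<in> n ` S r then x (inv_into (S r) n l) else 0))" for l
    proof -
      have "(\<Sum>j. if n j = l then x j else 0) = (\<Sum>j. \<Sum>r<L. (if n j = l \<and> j \<in> S r then x j else 0))"
        using L by (intro suminf_cong) (auto simp: S_def sum.delta if_distrib cong: if_cong)
      also have "\<dots> = (\<Sum>r<L. \<Sum>j. (if n j = l \<and> j \<in> S r then x j else 0))"
        by (rule suminf_sum) auto
      also have "\<dots> = (\<Sum>r<L. (if l \<in> n ` S r then x (inv_into (S r) n l) else 0))"
        by (intro sum.cong one) auto
      finally show ?thesis .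
    qed
    then show ?thesis by simp
  qed
  also have "\<dots> \<le> (\<Sum>r<L. Lpn (count_space UNIV) q (\<lambda>l. if l \<in> n ` S r then x (inv_into (S r) n l) else 0))"
    by (rule Lpn_sum[OF q]) simp
  also have "\<dots> \<le> (\<Sum>r<L. Lpn (count_space UNIV) q x)"
    by (intro sum_mono Lpn_pullback[OF q] inj_on_inv_into) auto
  finally show ?thesis by simp
qed


lemma int_sum_split:
  fixes f :: "int \<Rightarrow> ennreal"
  shows "(\<integral>\<^sup>+z. f z \<partial>count_space UNIV) \<le> (\<Sum>n. f (int n)) + (\<Sum>n. f (- int n))"
proof -
  have r: "(\<integral>\<^sup>+z. f z * indicator (range e) z \<partial>count_space UNIV) = (\<Sum>n. f (e n))"
    if inj: "inj e" and ne: "range e \<noteq> UNIV" for e :: "nat \<Rightarrow> int"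
  proof -
    have "(\<integral>\<^sup>+z. f z * indicator (range e) z \<partial>count_space UNIV) = (\<integral>\<^sup>+z. f z \<partial>count_space (range e))"
      using ne by (simp add: nn_integral_count_space_indicator)
    also have "\<dots> = (\<integral>\<^sup>+n. f (e n) \<partial>count_space UNIV)"
      using inj by (intro nn_integral_bij_count_space[symmetric]) (simp add: bij_betw_def)
    finally show ?thesis by (simp add: nn_integral_count_space_nat)
  qed
  have "(\<integral>\<^sup>+z. f z \<partial>count_space UNIV) \<le>
     (\<integral>\<^sup>+z. f z * indicator (range int) z + f z * indicator (range (\<lambda>n. - int n)) z \<partial>count_space UNIV)"
  proof (intro nn_integral_mono)
    fix z :: int
    show "f z \<le> f z * indicator (range int) z + f z * indicator (range (\<lambda>n. - int n)) z"
    proof (cases "0 \<le> z")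
      case True then have "z \<in> range int" using nonneg_int_cases[of z] by blast
      then show ?thesis by (simp add: indicator_def)
    next
      case False then have "0 \<le> - z" by simp
      then obtain n where "- z = int n" using nonneg_int_cases[of "- z"] by blast
      then have "z \<in> range (\<lambda>n. - int n)" by (intro image_eqI[of _ _ n]) auto
      then show ?thesis by (simp add: indicator_def)
    qed
  qed
  also have "\<dots> = (\<integral>\<^sup>+z. f z * indicator (range int) z \<partial>count_space UNIV)
       + (\<integral>\<^sup>+z. f z * indicator (range (\<lambda>n. - int n)) z \<partial>count_space UNIV)"
    by (rule nn_integral_add) auto
  also have "\<dots> = (\<Sum>n. f (int n)) + (\<Sum>n. f (- int n))"
  proof -
    have ne1: "range int \<noteq> UNIV"
    proof
      assume "range int = UNIV"
      then have "(-1::int) \<in> range int" by simp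
      then show False by auto
    qed
    have ne2: "range (\<lambda>n. - int n) \<noteq> UNIV"
    proof
      assume "range (\<lambda>n. - int n) = UNIV"
      then have "(1::int) \<in> range (\<lambda>n. - int n)" by simp
      then show False by auto
    qed
    show ?thesis using r[OF _ ne1] r[OF _ ne2] by (simp add: inj_def)
  qed
  finally show ?thesis .
qed

lemma kern_sum:
  fixes a \<mu> :: real
  assumes a: "1 < a" and mu: "0 < \<mu>"
  shows "(\<integral>\<^sup>+z. ennreal (a powr (- \<mu> * \<bar>real_of_int z\<bar>)) \<partial>count_space UNIV)
       \<le> ennreal (2 / (1 - a powr (- \<mu>)))"
proof -
  define \<rho> where "\<rho> = a powr (- \<mu>)"
  have \<rho>: "0 < \<rho>" "\<rho> < 1" using a mu by (auto simp: \<rho>_def powr_less_one)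
  have k: "a powr (- \<mu> * \<bar>real_of_int (int n)\<bar>) = \<rho> ^ n"
       "a powr (- \<mu> * \<bar>real_of_int (- int n)\<bar>) = \<rho> ^ n" for n
  proof -
    have "a powr - (\<mu> * real n) = (a powr - \<mu>) powr real n" using a by (simp add: powr_powr)
    also have "\<dots> = (a powr - \<mu>) ^ n" using a by (simp add: powr_realpow)
    finally show "a powr (- \<mu> * \<bar>real_of_int (int n)\<bar>) = \<rho> ^ n"
       "a powr (- \<mu> * \<bar>real_of_int (- int n)\<bar>) = \<rho> ^ n" by (simp_all add: \<rho>_def)
  qed
  have k0: "a powr - (\<mu> * real n) = \<rho> ^ n" for n using k(1)[of n] by simp
  have s: "(\<Sum>n. ennreal (\<rho> ^ n)) = ennreal (1 / (1 - \<rho>))"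
    using \<rho> by (intro suminf_ennreal_eq geometric_sums) auto
  have "(\<integral>\<^sup>+z. ennreal (a powr (- \<mu> * \<bar>real_of_int z\<bar>)) \<partial>count_space UNIV)
     \<le> (\<Sum>n. ennreal (\<rho> ^ n)) + (\<Sum>n. ennreal (\<rho> ^ n))"
    using int_sum_split[of "\<lambda>z. ennreal (a powr (- \<mu> * \<bar>real_of_int z\<bar>))"] by (simp add: k0)
  also have "\<dots> = ennreal (2 / (1 - \<rho>))" using \<rho> by (simp add: s ennreal_plus[symmetric] del: ennreal_plus)
  finally show ?thesis by (simp add: \<rho>_def)
qed

lemma B_as_a: fixes a B r :: real assumes "1 < a" "0 < B" shows "B powr r = a powr (ln B / ln a * r)"
proof -
  have "ln a > 0" using assms(1) by (rule ln_gt_zero)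
  then have "ln B / ln a * r * ln a = r * ln B" by (simp add: field_simps)
  then show ?thesis using assms by (simp add: powr_def)
qed

lemma mod_gap: assumes "(j::nat) < j'" "j mod L = j' mod L" shows "j + L \<le> j'"
proof -
  have "L dvd j' - j" using mod_eq_dvd_iff_nat[of j j' L] assms by simp
  then obtain c where c: "j' - j = L * c" by blast
  have "c \<noteq> 0" using c assms by (cases c) auto
  then have "L \<le> L * c" by simp
  then show ?thesis using c assms by linarith
qed

lemma L_def_props:
  fixes \<gamma> :: real assumes "0 < \<gamma>"
  shows "1 \<le> nat \<lceil>1/\<gamma>\<rceil> + 1" "1 \<le> real (nat \<lceil>1/\<gamma>\<rceil> + 1) * \<gamma>"
proof -
  show "1 \<le> nat \<lceil>1/\<gamma>\<rceil> + 1" by simp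
  have "1/\<gamma> \<le> real (nat \<lceil>1/\<gamma>\<rceil>)" by linarith
  then have "1/\<gamma> \<le> real (nat \<lceil>1/\<gamma>\<rceil> + 1)" by simp
  then show "1 \<le> real (nat \<lceil>1/\<gamma>\<rceil> + 1) * \<gamma>" using assms by (simp add: field_simps)
qed

lemma ceil_inj_res:
  fixes \<gamma> :: real and L :: nat
  assumes g: "0 < \<gamma>" and L: "1 \<le> real L * \<gamma>"
  shows "inj_on (\<lambda>j::nat. \<lceil>- real j * \<gamma>\<rceil>) {j. j mod L = r}"
proof -
  have less: "\<lceil>- real j' * \<gamma>\<rceil> < \<lceil>- real j * \<gamma>\<rceil>" if "j < j'" "j mod L = j' mod L" for j j'
  proof -
    have "j + L \<le> j'" using mod_gap[OF that] .
    then have "real j + real L \<le> real j'" by linarith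
    then have "real j * \<gamma> + real L * \<gamma> \<le> real j' * \<gamma>" using g
      by (metis distrib_right mult_right_mono less_imp_le of_nat_add)
    then have "- real j' * \<gamma> \<le> - real j * \<gamma> - 1" using L by linarith
    then have "\<lceil>- real j' * \<gamma>\<rceil> \<le> \<lceil>- real j * \<gamma> - 1\<rceil>" by (rule ceiling_mono)
    also have "\<dots> = \<lceil>- real j * \<gamma>\<rceil> - 1" by (simp add: ceiling_diff_one)
    finally show ?thesis by simp
  qed
  show ?thesis
  proof (rule inj_onI)
    fix j j' assume "j \<in> {j. j mod L = r}" "j' \<in> {j. j mod L = r}"
      "\<lceil>- real j * \<gamma>\<rceil> = \<lceil>- real j' * \<gamma>\<rceil>"
    then show "j = j'" using less[of j j'] less[of j' j] by (cases j j' rule: linorder_cases) auto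
  qed
qed

lemma floor_inj_res:
  fixes \<gamma> :: real and L :: nat
  assumes g: "0 < \<gamma>" and L: "1 \<le> real L * \<gamma>"
  shows "inj_on (\<lambda>j::nat. \<lfloor>real j * \<gamma>\<rfloor>) {j. j mod L = r}"
proof -
  have less: "\<lfloor>real j * \<gamma>\<rfloor> < \<lfloor>real j' * \<gamma>\<rfloor>" if "j < j'" "j mod L = j' mod L" for j j'
  proof -
    have "j + L \<le> j'" using mod_gap[OF that] .
    then have "real j + real L \<le> real j'" by linarith
    then have "real j * \<gamma> + real L * \<gamma> \<le> real j' * \<gamma>" using g
      by (metis distrib_right mult_right_mono less_imp_le of_nat_add)
    then have "real j * \<gamma> + 1 \<le> real j' * \<gamma>" using L by linarith
    then have "\<lfloor>real j * \<gamma> + 1\<rfloor> \<le> \<lfloor>real j' * \<gamma>\<rfloor>" by (rule floor_mono)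
    then show ?thesis by simp
  qed
  show ?thesis
  proof (rule inj_onI)
    fix j j' assume "j \<in> {j. j mod L = r}" "j' \<in> {j. j mod L = r}"
      "\<lfloor>real j * \<gamma>\<rfloor> = \<lfloor>real j' * \<gamma>\<rfloor>"
    then show "j = j'" using less[of j j'] less[of j' j] by (cases j j' rule: linorder_cases) auto
  qed
qed


lemma hardy_lower:
  fixes a B \<theta> D :: real and q :: ennreal
  assumes a: "1 < a" and B: "1 < B" and th: "0 < \<theta>" and q: "1 \<le> q" and D: "0 \<le> D"
  shows "\<exists>C>0. \<forall>(x::nat \<Rightarrow> ennreal) (K::real \<Rightarrow> ennreal). x 0 = 0 \<longrightarrow>
     (\<forall>t>0. \<forall>j\<ge>1. x j \<le> ennreal (D * B powr (real j * \<theta>) * max 1 (B powr (- real j) / t)) * K t) \<longrightarrow>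
     Lpn (count_space UNIV) q x \<le> ennreal C *
       Lpn (count_space UNIV) q (\<lambda>m::int. ennreal (a powr (- real_of_int m * \<theta>)) * K (a powr real_of_int m))"
proof -
  define \<gamma> where "\<gamma> = ln B / ln a"
  have g: "0 < \<gamma>" using a B by (simp add: \<gamma>_def ln_gt_zero)
  define L where "L = nat \<lceil>1/\<gamma>\<rceil> + 1"
  have L: "1 \<le> L" "1 \<le> real L * \<gamma>" using L_def_props[OF g] by (simp_all add: L_def)
  have Bp: "B powr r = a powr (\<gamma> * r)" for r using B_as_a[of a B r] a B by (simp add: \<gamma>_def)
  define m where "m j = \<lceil>- real j * \<gamma>\<rceil>" for j :: nat
  define C where "C = (D + 1) * a powr \<theta> * real L"
  have C: "0 < C" using D L a by (simp add: C_def)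
  show ?thesis
  proof (intro exI[of _ C] conjI C allI impI)
    fix x :: "nat \<Rightarrow> ennreal" and K :: "real \<Rightarrow> ennreal"
    assume x0: "x 0 = 0"
      and hyp: "\<forall>t>0. \<forall>j\<ge>1. x j \<le> ennreal (D * B powr (real j * \<theta>) * max 1 (B powr (- real j) / t)) * K t"
    define y where "y z = ennreal (a powr (- real_of_int z * \<theta>)) * K (a powr real_of_int z)" for z :: int
    have xj: "x j \<le> ennreal (D * a powr \<theta>) * y (m j)" for j
    proof (cases "j = 0")
      case True then show ?thesis using x0 by simp
    next
      case False
      define t where "t = a powr real_of_int (m j)"
      have t: "0 < t" using a by (simp add: t_def)
      have m1: "- real j * \<gamma> \<le> real_of_int (m j)" by (simp add: m_def)
      have m2: "real_of_int (m j) < - real j * \<gamma> + 1" unfolding m_def by linarith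
      have "B powr (- real j) = a powr (- real j * \<gamma>)" by (simp add: Bp mult.commute)
      also have "\<dots> \<le> t" unfolding t_def using a m1 by (intro powr_mono) auto
      finally have "B powr (- real j) / t \<le> 1" using t by simp
      then have mx: "max 1 (B powr (- real j) / t) = 1" by simp
      have "B powr (real j * \<theta>) = a powr (\<gamma> * (real j * \<theta>))" by (rule Bp)
      also have "\<dots> \<le> a powr (\<theta> + (- real_of_int (m j) * \<theta>))"
      proof (intro powr_mono)
        have "\<gamma> * real j < 1 - real_of_int (m j)" using m2 by (simp add: algebra_simps)
        then have "\<gamma> * real j * \<theta> \<le> (1 - real_of_int (m j)) * \<theta>" using th by (intro mult_right_mono) auto
        then show "\<gamma> * (real j * \<theta>) \<le> \<theta> + - real_of_int (m j) * \<theta>" by (simp add: algebra_simps)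
      qed (use a in auto)
      also have "\<dots> = a powr \<theta> * a powr (- real_of_int (m j) * \<theta>)" by (rule powr_add)
      finally have bb: "B powr (real j * \<theta>) \<le> a powr \<theta> * a powr (- real_of_int (m j) * \<theta>)" .
      have "x j \<le> ennreal (D * B powr (real j * \<theta>) * max 1 (B powr (- real j) / t)) * K t"
        using hyp t False by (meson less_one not_le)
      then have "x j \<le> ennreal (D * B powr (real j * \<theta>)) * K t" unfolding mx by simp
      also have "\<dots> \<le> ennreal (D * (a powr \<theta> * a powr (- real_of_int (m j) * \<theta>))) * K t"
        using bb D by (intro mult_right_mono ennreal_leI mult_left_mono) auto
      also have "\<dots> = ennreal (D * a powr \<theta>) * y (m j)"
      proof -
        have "ennreal (D * (a powr \<theta> * a powr (- real_of_int (m j) * \<theta>)))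
            = ennreal (D * a powr \<theta>) * ennreal (a powr (- real_of_int (m j) * \<theta>))"
          using D by (simp add: ennreal_mult[symmetric] mult.assoc)
        then show ?thesis by (simp add: y_def t_def mult.assoc)
      qed
      finally show ?thesis .
    qed
    have "Lpn (count_space UNIV) q x \<le> Lpn (count_space UNIV) q (\<lambda>j. ennreal (D * a powr \<theta>) * y (m j))"
      by (intro Lpn_mono AE_I2 xj)
    also have "\<dots> \<le> ennreal (D * a powr \<theta>) * Lpn (count_space UNIV) q (\<lambda>j. y (m j))"
      using D by (intro Lpn_cmult q) auto
    also have "\<dots> \<le> ennreal (D * a powr \<theta>) * (of_nat L * Lpn (count_space UNIV) q y)"
      unfolding m_def using ceil_inj_res[OF g L(2)]
      by (intro mult_left_mono Lpn_pull_fiber q L(1)) auto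
    also have "\<dots> \<le> ennreal C * Lpn (count_space UNIV) q y"
    proof -
      have "ennreal (D * a powr \<theta>) * (of_nat L * Lpn (count_space UNIV) q y)
          = ennreal (D * a powr \<theta> * real L) * Lpn (count_space UNIV) q y"
      proof -
        have "ennreal (D * a powr \<theta> * real L) = ennreal (D * a powr \<theta>) * ennreal (real L)"
          using D by (simp add: ennreal_mult)
        then show ?thesis by (simp add: ennreal_of_nat_eq_real_of_nat mult.assoc)
      qed
      also have "\<dots> \<le> ennreal C * Lpn (count_space UNIV) q y"
        unfolding C_def using a D by (intro mult_right_mono ennreal_leI mult_right_mono) auto
      finally show ?thesis .
    qed
    finally show "Lpn (count_space UNIV) q x \<le> ennreal C *
       Lpn (count_space UNIV) q (\<lambda>m::int. ennreal (a powr (- real_of_int m * \<theta>)) * K (a powr real_of_int m))"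
      unfolding y_def[abs_def] .
  qed
qed


lemma kern_bound:
  fixes a \<theta> r \<mu> :: real and z :: int
  assumes a: "1 < a" and th: "0 < \<theta>" "\<theta> < 1" and mu: "\<mu> = min \<theta> (1 - \<theta>)"
    and z: "\<bar>real_of_int z\<bar> \<le> \<bar>r\<bar> + 1"
  shows "min (a powr (- \<theta> * r)) (a powr ((1 - \<theta>) * r)) \<le> a powr \<mu> * a powr (- \<mu> * \<bar>real_of_int z\<bar>)"
proof -
  have m1: "\<mu> \<le> \<theta>" "\<mu> \<le> 1 - \<theta>" "0 < \<mu>" using mu th by auto
  have "min (a powr (- \<theta> * r)) (a powr ((1 - \<theta>) * r)) \<le> a powr (- \<mu> * \<bar>r\<bar>)"
  proof (cases "0 \<le> r")
    case True
    have "a powr (- \<theta> * r) \<le> a powr (- \<mu> * \<bar>r\<bar>)"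
      using True m1 a by (intro powr_mono) (auto intro: mult_right_mono)
    then show ?thesis by simp
  next
    case False
    have "(1 - \<theta>) * r \<le> \<mu> * r" using False m1 by (intro mult_right_mono_neg) auto
    then have "a powr ((1 - \<theta>) * r) \<le> a powr (- \<mu> * \<bar>r\<bar>)"
      using False a by (intro powr_mono) auto
    then show ?thesis by simp
  qed
  also have "\<dots> \<le> a powr (\<mu> + - \<mu> * \<bar>real_of_int z\<bar>)"
  proof (intro powr_mono)
    have "\<mu> * \<bar>real_of_int z\<bar> \<le> \<mu> * (\<bar>r\<bar> + 1)" using z m1 by (intro mult_left_mono) auto
    then show "- \<mu> * \<bar>r\<bar> \<le> \<mu> + - \<mu> * \<bar>real_of_int z\<bar>" by (simp add: algebra_simps)
  qed (use a in auto)
  also have "\<dots> = a powr \<mu> * a powr (- \<mu> * \<bar>real_of_int z\<bar>)" by (rule powr_add)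
  finally show ?thesis .
qed

lemma floor_close: "\<bar>real_of_int (m + \<lfloor>r\<rfloor>)\<bar> \<le> \<bar>real_of_int m + r\<bar> + 1"
proof -
  have "real_of_int \<lfloor>r\<rfloor> \<le> r" "r < real_of_int \<lfloor>r\<rfloor> + 1" by linarith+
  then show ?thesis by linarith
qed

lemma conv_identity:
  fixes k :: "int \<Rightarrow> real" and n :: "nat \<Rightarrow> int" and x :: "nat \<Rightarrow> ennreal"
  shows "(\<Sum>j. ennreal (k (m + n j)) * x j)
       = (\<integral>\<^sup>+z. ennreal (k z) * (\<Sum>j. if n j = z - m then x j else 0) \<partial>count_space UNIV)"
proof -
  have "(\<integral>\<^sup>+z. ennreal (k z) * (\<Sum>j. if n j = z - m then x j else 0) \<partial>count_space UNIV)
      = (\<integral>\<^sup>+z. (\<Sum>j. ennreal (k z) * (if z = m + n j then x j else 0)) \<partial>count_space UNIV)"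
  proof (intro nn_integral_cong)
    fix z
    have "(\<lambda>j. if n j = z - m then x j else 0) = (\<lambda>j. if z = m + n j then x j else 0)" by (intro ext) auto
    then show "ennreal (k z) * (\<Sum>j. if n j = z - m then x j else 0) = (\<Sum>j. ennreal (k z) * (if z = m + n j then x j else 0))"
      by simp
  qed
  also have "\<dots> = (\<Sum>j. \<integral>\<^sup>+z. ennreal (k z) * (if z = m + n j then x j else 0) \<partial>count_space UNIV)"
    by (rule nn_integral_suminf) auto
  also have "\<dots> = (\<Sum>j. ennreal (k (m + n j)) * x j)"
  proof (intro suminf_cong)
    fix j
    show "(\<integral>\<^sup>+z. ennreal (k z) * (if z = m + n j then x j else 0) \<partial>count_space UNIV) = ennreal (k (m + n j)) * x j"
    proof -
      have "(\<integral>\<^sup>+z. ennreal (k z) * (if z = m + n j then x j else 0) \<partial>count_space UNIV)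
          = (\<Sum>z\<in>{m + n j}. ennreal (k z) * (if z = m + n j then x j else 0))"
        by (rule nn_integral_count_space') auto
      then show ?thesis by simp
    qed
  qed
  finally show ?thesis by simp
qed

lemma hardy_upper:
  fixes a B \<theta> D :: real and q :: ennreal
  assumes a: "1 < a" and B: "1 < B" and th: "0 < \<theta>" "\<theta> < 1" and q: "1 \<le> q" and D: "0 \<le> D"
  shows "\<exists>C>0. \<forall>(x::nat \<Rightarrow> ennreal) (K::real \<Rightarrow> ennreal).
     (\<forall>t>0. K t \<le> (\<Sum>j. ennreal (D * min (B powr (- real j * \<theta>)) (t * B powr (real j * (1 - \<theta>)))) * x j)) \<longrightarrow>
     Lpn (count_space UNIV) q (\<lambda>m::int. ennreal (a powr (- real_of_int m * \<theta>)) * K (a powr real_of_int m))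
       \<le> ennreal C * Lpn (count_space UNIV) q x"
proof -
  define \<gamma> where "\<gamma> = ln B / ln a"
  have g: "0 < \<gamma>" using a B by (simp add: \<gamma>_def ln_gt_zero)
  define L where "L = nat \<lceil>1/\<gamma>\<rceil> + 1"
  have L: "1 \<le> L" "1 \<le> real L * \<gamma>" using L_def_props[OF g] by (simp_all add: L_def)
  have Bp: "B powr r = a powr (\<gamma> * r)" for r using B_as_a[of a B r] a B by (simp add: \<gamma>_def)
  define \<mu> where "\<mu> = min \<theta> (1 - \<theta>)"
  have mu: "0 < \<mu>" using th by (simp add: \<mu>_def)
  define kern where "kern z = a powr (- \<mu> * \<bar>real_of_int z\<bar>)" for z :: int
  define n where "n j = \<lfloor>real j * \<gamma>\<rfloor>" for j :: nat
  define KS where "KS = 2 / (1 - a powr (- \<mu>))"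
  have KS: "0 < KS" using a mu by (simp add: KS_def powr_less_one)
  define C where "C = (D + 1) * a powr \<mu> * KS * real L"
  have C: "0 < C" using D L a KS by (simp add: C_def)
  show ?thesis
  proof (intro exI[of _ C] conjI C allI impI)
    fix x :: "nat \<Rightarrow> ennreal" and K :: "real \<Rightarrow> ennreal"
    assume hyp: "\<forall>t>0. K t \<le> (\<Sum>j. ennreal (D * min (B powr (- real j * \<theta>)) (t * B powr (real j * (1 - \<theta>)))) * x j)"
    define y where "y m = ennreal (a powr (- real_of_int m * \<theta>)) * K (a powr real_of_int m)" for m :: int
    define X where "X l = (\<Sum>j. if n j = l then x j else 0)" for l :: int
    have stepA: "y m \<le> ennreal (D * a powr \<mu>) * (\<integral>\<^sup>+z. ennreal (kern z) * X (z - m) \<partial>count_space UNIV)" for m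
    proof -
      have "y m \<le> ennreal (a powr (- real_of_int m * \<theta>)) *
          (\<Sum>j. ennreal (D * min (B powr (- real j * \<theta>)) (a powr real_of_int m * B powr (real j * (1 - \<theta>)))) * x j)"
        unfolding y_def using hyp a by (intro mult_left_mono) auto
      also have "\<dots> = (\<Sum>j. ennreal (a powr (- real_of_int m * \<theta>)) *
          (ennreal (D * min (B powr (- real j * \<theta>)) (a powr real_of_int m * B powr (real j * (1 - \<theta>)))) * x j))"
        by simp
      also have "\<dots> \<le> (\<Sum>j. ennreal (D * a powr \<mu>) * (ennreal (kern (m + n j)) * x j))"
      proof (intro suminf_le summableI)
        fix j
        define r where "r = real_of_int m + real j * \<gamma>"
        have e1: "a powr (- real_of_int m * \<theta>) * B powr (- real j * \<theta>) = a powr (- \<theta> * r)"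
          by (simp add: Bp r_def powr_add[symmetric] algebra_simps)
        have e2: "a powr (- real_of_int m * \<theta>) * (a powr real_of_int m * B powr (real j * (1 - \<theta>))) = a powr ((1 - \<theta>) * r)"
          by (simp add: Bp r_def powr_add[symmetric] algebra_simps)
        have "a powr (- real_of_int m * \<theta>) * (D * min (B powr (- real j * \<theta>)) (a powr real_of_int m * B powr (real j * (1 - \<theta>))))
            = D * min (a powr (- \<theta> * r)) (a powr ((1 - \<theta>) * r))"
        proof -
          have "a powr (- real_of_int m * \<theta>) * (D * min (B powr (- real j * \<theta>)) (a powr real_of_int m * B powr (real j * (1 - \<theta>))))
             = D * (a powr (- real_of_int m * \<theta>) * min (B powr (- real j * \<theta>)) (a powr real_of_int m * B powr (real j * (1 - \<theta>))))"
            by (simp only: mult.left_commute)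
          also have "a powr (- real_of_int m * \<theta>) * min (B powr (- real j * \<theta>)) (a powr real_of_int m * B powr (real j * (1 - \<theta>)))
             = min (a powr (- real_of_int m * \<theta>) * B powr (- real j * \<theta>)) (a powr (- real_of_int m * \<theta>) * (a powr real_of_int m * B powr (real j * (1 - \<theta>))))"
            by (simp add: min_mult_distrib_left)
          finally show ?thesis unfolding e1 e2 .
        qed
        also have "\<dots> \<le> D * (a powr \<mu> * kern (m + n j))"
          unfolding kern_def using D
          by (intro mult_left_mono kern_bound[OF a th \<mu>_def]) (use floor_close[of m "real j * \<gamma>"] in \<open>simp_all add: n_def r_def\<close>)
        finally have ineq: "a powr (- real_of_int m * \<theta>) * (D * min (B powr (- real j * \<theta>)) (a powr real_of_int m * B powr (real j * (1 - \<theta>))))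
            \<le> D * a powr \<mu> * kern (m + n j)" by (simp add: mult.assoc)
        show "ennreal (a powr (- real_of_int m * \<theta>)) *
          (ennreal (D * min (B powr (- real j * \<theta>)) (a powr real_of_int m * B powr (real j * (1 - \<theta>)))) * x j)
          \<le> ennreal (D * a powr \<mu>) * (ennreal (kern (m + n j)) * x j)"
          unfolding mult.assoc[symmetric] ennreal_mult'[symmetric]
          using ineq D by (intro mult_right_mono ennreal_leI) (auto simp: ennreal_mult[symmetric] kern_def)
      qed
      also have "\<dots> = ennreal (D * a powr \<mu>) * (\<Sum>j. ennreal (kern (m + n j)) * x j)" by simp
      also have "(\<Sum>j. ennreal (kern (m + n j)) * x j) = (\<integral>\<^sup>+z. ennreal (kern z) * X (z - m) \<partial>count_space UNIV)"
        unfolding X_def by (rule conv_identity)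
      finally show ?thesis .
    qed
    have "Lpn (count_space UNIV) q y \<le> Lpn (count_space UNIV) q
        (\<lambda>m. ennreal (D * a powr \<mu>) * (\<integral>\<^sup>+z. ennreal (kern z) * X (z - m) \<partial>count_space UNIV))"
      by (intro Lpn_mono AE_I2 stepA)
    also have "\<dots> \<le> ennreal (D * a powr \<mu>) * Lpn (count_space UNIV) q
        (\<lambda>m. \<integral>\<^sup>+z. ennreal (kern z) * X (z - m) \<partial>count_space UNIV)"
      using D by (intro Lpn_cmult q) auto
    also have "Lpn (count_space UNIV) q (\<lambda>m. \<integral>\<^sup>+z. ennreal (kern z) * X (z - m) \<partial>count_space UNIV)
        \<le> (\<integral>\<^sup>+z. Lpn (count_space UNIV) q (\<lambda>m. ennreal (kern z) * X (z - m)) \<partial>count_space UNIV)"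
      by (intro Lpn_suminf_int q) auto
    also have "\<dots> \<le> (\<integral>\<^sup>+z. ennreal (kern z) * Lpn (count_space UNIV) q X \<partial>count_space UNIV)"
    proof (intro nn_integral_mono)
      fix z :: int
      have "Lpn (count_space UNIV) q (\<lambda>m. ennreal (kern z) * X (z - m)) \<le> ennreal (kern z) * Lpn (count_space UNIV) q (\<lambda>m. X (z - m))"
        by (intro Lpn_cmult q) (auto simp: kern_def)
      also have "Lpn (count_space UNIV) q (\<lambda>m. X (z - m)) = Lpn (count_space UNIV) q X"
      proof (rule Lpn_bij[OF q])
        show "bij (\<lambda>m::int. z - m)" by (rule bij_betwI[where g="\<lambda>m. z - m"]) auto
      qed
      finally show "Lpn (count_space UNIV) q (\<lambda>m. ennreal (kern z) * X (z - m)) \<le> ennreal (kern z) * Lpn (count_space UNIV) q X" .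
    qed
    also have "\<dots> = (\<integral>\<^sup>+z. ennreal (kern z) \<partial>count_space UNIV) * Lpn (count_space UNIV) q X"
      by (rule nn_integral_multc) auto
    also have "\<dots> \<le> ennreal KS * (of_nat L * Lpn (count_space UNIV) q x)"
    proof (intro mult_mono)
      show "(\<integral>\<^sup>+z. ennreal (kern z) \<partial>count_space UNIV) \<le> ennreal KS"
        unfolding kern_def KS_def by (rule kern_sum[OF a mu])
      show "Lpn (count_space UNIV) q X \<le> of_nat L * Lpn (count_space UNIV) q x"
        unfolding X_def[abs_def] n_def using floor_inj_res[OF g L(2)] by (intro Lpn_push_fiber q L(1)) auto
    qed auto
    finally have "Lpn (count_space UNIV) q y \<le> ennreal (D * a powr \<mu>) * (ennreal KS * (of_nat L * Lpn (count_space UNIV) q x))"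
      by (simp add: mult_left_mono)
    also have "\<dots> = ennreal (D * a powr \<mu> * KS * real L) * Lpn (count_space UNIV) q x"
      using D KS by (simp add: ennreal_mult ennreal_of_nat_eq_real_of_nat mult.assoc)
    also have "\<dots> \<le> ennreal C * Lpn (count_space UNIV) q x"
      unfolding C_def using D KS a by (intro mult_right_mono ennreal_leI) auto
    finally show "Lpn (count_space UNIV) q (\<lambda>m::int. ennreal (a powr (- real_of_int m * \<theta>)) * K (a powr real_of_int m))
       \<le> ennreal C * Lpn (count_space UNIV) q x" unfolding y_def[abs_def] .
  qed
qed


lemma le_cmult_Inf:
  fixes N :: ennreal
  assumes c: "0 < c" and h: "\<And>v. v \<in> S \<Longrightarrow> N \<le> ennreal c * v"
  shows "N \<le> ennreal c * Inf S"
proof -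
  have inv: "ennreal (1/c) * ennreal c = 1" using c by (simp add: ennreal_mult[symmetric])
  have "ennreal (1/c) * N \<le> Inf S"
  proof (rule Inf_greatest)
    fix v assume "v \<in> S"
    then have "ennreal (1/c) * N \<le> ennreal (1/c) * (ennreal c * v)" by (intro mult_left_mono h) auto
    also have "\<dots> = (ennreal (1/c) * ennreal c) * v" by (rule mult.assoc[symmetric])
    also have "\<dots> = v" by (simp only: inv mult_1)
    finally show "ennreal (1/c) * N \<le> v" .
  qed
  then have "ennreal c * (ennreal (1/c) * N) \<le> ennreal c * Inf S" by (rule mult_left_mono) simp
  also have "ennreal c * (ennreal (1/c) * N) = (ennreal (1/c) * ennreal c) * N" by (simp only: mult.assoc mult.left_commute)
  also have "\<dots> = N" by (simp only: inv mult_1)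
  finally show ?thesis .
qed

lemma cm_add: "coeff_measurable M f0 \<Longrightarrow> coeff_measurable M f1 \<Longrightarrow> coeff_measurable M (\<lambda>w k. f0 w k + f1 w k)"
  unfolding coeff_measurable_def by (auto intro: borel_measurable_add)

lemma cm_restrict: "coeff_measurable M f \<Longrightarrow> coeff_measurable M (\<lambda>w k. if P k then f w k else 0)"
  unfolding coeff_measurable_def
proof (intro allI)
  fix k assume "\<forall>k. (\<lambda>w. f w k) \<in> borel_measurable M"
  then show "(\<lambda>w. if P k then f w k else 0) \<in> borel_measurable M" by (cases "P k") auto
qed

lemma cm_Pi: "coeff_measurable M f \<Longrightarrow> coeff_measurable M (Pi_dy j f)"
  unfolding Pi_dy_def by (rule cm_restrict)

lemma cm_zero: "coeff_measurable M (\<lambda>w k. 0)"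
  by (simp add: coeff_measurable_def)

lemma Pi_add: "Pi_dy j (\<lambda>w k. f0 w k + f1 w k) = (\<lambda>w k. Pi_dy j f0 w k + Pi_dy j f1 w k)"
  by (auto simp: Pi_dy_def fun_eq_iff)

lemma Pi_0: "Pi_dy 0 f = (\<lambda>w k. 0)"
  by (auto simp: Pi_dy_def fun_eq_iff)

lemma Hdot_zero: "Hdot_norm lam s (\<lambda>k. 0) = 0"
  by (simp add: Hdot_norm_def Hdot_sq_def)

lemma N_zero: "1 \<le> p \<Longrightarrow> LpH_norm M lam p s (\<lambda>w k. 0) = 0"
  by (simp add: LpH_norm_Lpn Hdot_zero)

lemma N_add:
  assumes p: "1 \<le> p" and "coeff_measurable M f0" "coeff_measurable M f1"
  shows "LpH_norm M lam p s (\<lambda>w k. f0 w k + f1 w k) \<le> LpH_norm M lam p s f0 + LpH_norm M lam p s f1"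
proof -
  have "LpH_norm M lam p s (\<lambda>w k. f0 w k + f1 w k) \<le> Lpn M p (\<lambda>w. Hdot_norm lam s (f0 w) + Hdot_norm lam s (f1 w))"
    unfolding LpH_norm_Lpn by (intro Lpn_mono AE_I2 Hdot_add)
  also have "\<dots> \<le> LpH_norm M lam p s f0 + LpH_norm M lam p s f1"
    unfolding LpH_norm_Lpn using assms by (intro Lpn_add) auto
  finally show ?thesis .
qed

lemma N_mono:
  assumes "\<And>w k. k \<ge> 1 \<Longrightarrow> \<bar>f w k\<bar> \<le> \<bar>g w k\<bar>"
  shows "LpH_norm M lam p s f \<le> LpH_norm M lam p s g"
  unfolding LpH_norm_Lpn using assms by (intro Lpn_mono AE_I2 Hdot_mono) auto

lemma N_Pi_le: "LpH_norm M lam p s (Pi_dy j f) \<le> LpH_norm M lam p s f"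
  by (rule N_mono) (simp add: Pi_dy_def)

lemma N_sum_blocks:
  assumes p: "1 \<le> p" and cm: "coeff_measurable M f"
  shows "LpH_norm M lam p s f \<le> (\<Sum>j. LpH_norm M lam p s (Pi_dy j f))"
proof -
  have "LpH_norm M lam p s f \<le> Lpn M p (\<lambda>w. \<Sum>j. Hdot_norm lam s (Pi_dy j f w))"
    unfolding LpH_norm_Lpn Pi_dy_blk by (intro Lpn_mono AE_I2 Hdot_le_sum_blk)
  also have "\<dots> \<le> (\<Sum>j. LpH_norm M lam p s (Pi_dy j f))"
    unfolding LpH_norm_Lpn using cm_Pi[OF cm] by (intro Lpn_suminf p) auto
  finally show ?thesis .
qed

context weyl
begin

lemma N_Pi_scale:
  assumes p: "1 \<le> p" and j: "j \<ge> 1" and cm: "coeff_measurable M f"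
  shows "LpH_norm M lam p s (Pi_dy j f) \<le> ennreal (Kc (s - s') * G powr (real j * (s - s'))) * LpH_norm M lam p s' (Pi_dy j f)"
proof -
  have "(\<lambda>w. Hdot_norm lam s' (Pi_dy j f w)) \<in> borel_measurable M" using cm_Pi[OF cm, of j] by simp
  then show ?thesis
    unfolding LpH_norm_Lpn using Kc_pos[of "s - s'"]
    by (intro Lpn_cmult' p AE_I2) (auto simp: Pi_dy_blk Hdot_blk_scale[OF j])
qed

lemma N_neg2:
  assumes p: "1 \<le> p" and s: "-2 \<le> s" and cm: "coeff_measurable M f"
  shows "LpH_norm M lam p (-2) f \<le> ennreal (lam 1 powr ((-2 - s)/2)) * LpH_norm M lam p s f"
  unfolding LpH_norm_Lpn using cm by (intro Lpn_cmult' p AE_I2 Hdot_neg2 s) auto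

end


lemma interp_norm_Lpn:
  "interp_norm a X0 X1 \<theta> q f = Lpn (count_space UNIV) q
     (\<lambda>m::int. ennreal (a powr (- real_of_int m * \<theta>)) * K_fun X0 X1 (a powr real_of_int m) f)"
  unfolding interp_norm_def Lpn_def ess_sup_count by simp

lemma BLpH_norm_Lpn:
  assumes p: "1 \<le> p"
  shows "BLpH_norm M lam q p s v = Lpn (count_space UNIV) q (\<lambda>j. LpH_norm M lam p s (Pi_dy j v))"
proof -
  define g where "g j = LpH_norm M lam p s (Pi_dy j v)" for j
  have g0: "g 0 = 0" using p by (simp add: g_def Pi_0 N_zero)
  show ?thesis
  proof (cases "q = top")
    case True
    have "(SUP j\<in>{1..}. g j) = (SUP j. g j)"
    proof (rule antisym)
      show "(SUP j\<in>{1..}. g j) \<le> (SUP j. g j)" by (rule SUP_mono) auto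
      show "(SUP j. g j) \<le> (SUP j\<in>{1..}. g j)"
      proof (rule SUP_least)
        fix j show "g j \<le> (SUP j\<in>{1..}. g j)"
          by (cases "j = 0") (auto simp: g0 intro: SUP_upper)
      qed
    qed
    then show ?thesis using True by (simp add: BLpH_norm_def Lpn_def ess_sup_count g_def)
  next
    case False
    note P = p_real[OF _ False]
    have q1: "1 \<le> q \<Longrightarrow> True" by simp
    have "(\<Sum>j. epow (g (Suc j)) (enn2real q)) = (\<Sum>j. epow (g j) (enn2real q))"
    proof -
      have "(\<lambda>j. epow (g (Suc j)) (enn2real q)) sums (\<Sum>j. epow (g (Suc j)) (enn2real q))"
        by (rule summable_sums[OF summableI])
      then have "(\<lambda>j. epow (g j) (enn2real q)) sums ((\<Sum>j. epow (g (Suc j)) (enn2real q)) + epow (g 0) (enn2real q))"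
        by (rule sums_Suc)
      then show ?thesis by (simp add: sums_iff g0 epow_def)
    qed
    then show ?thesis using False
      by (simp add: BLpH_norm_def Lpn_def g_def nn_integral_count_space_nat)
  qed
qed

lemma Lpn_count_elem:
  fixes x :: "nat \<Rightarrow> ennreal"
  assumes q: "1 \<le> q"
  shows "x j \<le> Lpn (count_space UNIV) q x"
proof (cases "q = top")
  case True then show ?thesis by (simp add: Lpn_count_top SUP_upper)
next
  case False
  note P = p_real[OF q False]
  have "epow (x j) (enn2real q) = (\<Sum>i\<in>{j}. epow (x i) (enn2real q))" by simp
  also have "\<dots> \<le> (\<Sum>i. epow (x i) (enn2real q))" by (intro sum_le_suminf summableI) auto
  finally have "epow (x j) (enn2real q) \<le> (\<integral>\<^sup>+i. epow (x i) (enn2real q) \<partial>count_space UNIV)"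
    by (simp add: nn_integral_count_space_nat)
  then show ?thesis using False P by (simp add: Lpn_def epow_le_iff)
qed

lemma B_exists_J:
  fixes B t :: real assumes B: "1 < B" and t: "0 < t"
  shows "\<exists>J::nat. B powr (- real J) \<le> t"
proof -
  obtain n where n: "1/t < B ^ n" using real_arch_pow[OF B] by blast
  have "B powr (- real n) = 1 / B ^ n" using B by (simp add: powr_minus powr_realpow divide_inverse)
  also have "\<dots> \<le> t" using n t B by (simp add: field_simps)
  finally show ?thesis by blast
qed

lemma split_sum_bound:
  fixes B \<theta> t c0 c1 D :: real and x y0 y1 :: "nat \<Rightarrow> ennreal"
  assumes B: "1 < B" and th: "0 < \<theta>" "\<theta> < 1" and t: "0 < t" and c: "0 \<le> c0" "0 \<le> c1" "c0 \<le> D" "c1 \<le> D"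
    and J: "J = (LEAST J. B powr (- real J) \<le> t)"
    and y0: "\<And>j. y0 j \<le> ennreal (c0 * B powr (- real j * \<theta>)) * x j"
    and y1: "\<And>j. y1 j \<le> ennreal (c1 * B powr (real j * (1 - \<theta>))) * x j"
  shows "(\<Sum>j. if J \<le> j then y0 j else 0) + ennreal t * (\<Sum>j. if j < J then y1 j else 0)
     \<le> (\<Sum>j. ennreal (D * min (B powr (- real j * \<theta>)) (t * B powr (real j * (1 - \<theta>)))) * x j)"
proof -
  have ex: "\<exists>J. B powr (- real J) \<le> t" using B_exists_J[OF B t] .
  have BJ: "B powr (- real J) \<le> t" unfolding J by (rule LeastI_ex[OF ex])
  have eq: "B powr (- real j * \<theta>) = B powr (- real j) * B powr (real j * (1 - \<theta>))" for j
    by (simp add: powr_add[symmetric] algebra_simps)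
  have "(\<Sum>j. if J \<le> j then y0 j else 0) + ennreal t * (\<Sum>j. if j < J then y1 j else 0)
      = (\<Sum>j. (if J \<le> j then y0 j else 0) + ennreal t * (if j < J then y1 j else 0))"
  proof -
    have "ennreal t * (\<Sum>j. if j < J then y1 j else 0) = (\<Sum>j. ennreal t * (if j < J then y1 j else 0))"
      by (rule ennreal_suminf_cmult[symmetric])
    then show ?thesis by (simp only: suminf_add[OF summableI summableI])
  qed
  also have "\<dots> \<le> (\<Sum>j. ennreal (D * min (B powr (- real j * \<theta>)) (t * B powr (real j * (1 - \<theta>)))) * x j)"
  proof (intro suminf_le summableI)
    fix j
    show "(if J \<le> j then y0 j else 0) + ennreal t * (if j < J then y1 j else 0)
       \<le> ennreal (D * min (B powr (- real j * \<theta>)) (t * B powr (real j * (1 - \<theta>)))) * x j"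
    proof (cases "J \<le> j")
      case True
      have "B powr (- real j) \<le> B powr (- real J)" using True B by (intro powr_mono) auto
      then have "B powr (- real j) \<le> t" using BJ by simp
      then have "B powr (- real j * \<theta>) \<le> t * B powr (real j * (1 - \<theta>))"
        unfolding eq by (intro mult_right_mono) auto
      then have "c0 * B powr (- real j * \<theta>) \<le> D * min (B powr (- real j * \<theta>)) (t * B powr (real j * (1 - \<theta>)))"
        using c by (simp add: min_absorb1 mult_right_mono)
      then have "y0 j \<le> ennreal (D * min (B powr (- real j * \<theta>)) (t * B powr (real j * (1 - \<theta>)))) * x j"
        using y0[of j] by (meson ennreal_leI mult_right_mono order_trans zero_le)
      then show ?thesis using True by simp
    next
      case False
      have "j < (LEAST J. B powr (- real J) \<le> t)" using False J by simp
      then have "\<not> B powr (- real j) \<le> t" by (rule not_less_Least)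
      then have "t * B powr (real j * (1 - \<theta>)) \<le> B powr (- real j * \<theta>)"
        unfolding eq by (intro mult_right_mono) auto
      then have "t * (c1 * B powr (real j * (1 - \<theta>))) \<le> D * min (B powr (- real j * \<theta>)) (t * B powr (real j * (1 - \<theta>)))"
        using c t by (simp add: min_absorb2 mult.left_commute mult_right_mono)
      then have "ennreal t * y1 j \<le> ennreal (D * min (B powr (- real j * \<theta>)) (t * B powr (real j * (1 - \<theta>)))) * x j"
      proof -
        assume h: "t * (c1 * B powr (real j * (1 - \<theta>))) \<le> D * min (B powr (- real j * \<theta>)) (t * B powr (real j * (1 - \<theta>)))"
        have "ennreal t * y1 j \<le> ennreal t * (ennreal (c1 * B powr (real j * (1 - \<theta>))) * x j)"
          by (intro mult_left_mono y1) auto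
        also have "\<dots> = ennreal (t * (c1 * B powr (real j * (1 - \<theta>)))) * x j"
          using t c by (simp add: ennreal_mult mult.assoc)
        also have "\<dots> \<le> ennreal (D * min (B powr (- real j * \<theta>)) (t * B powr (real j * (1 - \<theta>)))) * x j"
          using h by (intro mult_right_mono ennreal_leI) auto
        finally show ?thesis .
      qed
      then show ?thesis using False by simp
    qed
  qed
  finally show ?thesis .
qed


definition hi :: "nat \<Rightarrow> ('w \<Rightarrow> nat \<Rightarrow> real) \<Rightarrow> ('w \<Rightarrow> nat \<Rightarrow> real)" where
  "hi J f = (\<lambda>w k. if k = 0 \<or> 2 ^ (J - 1) \<le> k then f w k else 0)"

definition lo :: "nat \<Rightarrow> ('w \<Rightarrow> nat \<Rightarrow> real) \<Rightarrow> ('w \<Rightarrow> nat \<Rightarrow> real)" where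
  "lo J f = (\<lambda>w k. if k \<noteq> 0 \<and> k < 2 ^ (J - 1) then f w k else 0)"

lemma hi_lo_sum: "(\<lambda>w k. hi J f w k + lo J f w k) = f"
  by (auto simp: hi_def lo_def fun_eq_iff)

lemma block_vs_cut:
  assumes "2 ^ (j - 1) \<le> k" "k < (2::nat) ^ j"
  shows "2 ^ (J - 1) \<le> k \<longleftrightarrow> J \<le> j" "k \<noteq> 0"
proof -
  show "k \<noteq> 0" using assms(1) by (metis le_zero_eq power_not_zero zero_neq_numeral)
  have j: "j \<ge> 1" using assms by (cases j) auto
  show "2 ^ (J - 1) \<le> k \<longleftrightarrow> J \<le> j"
  proof
    assume "J \<le> j"
    then have "(2::nat) ^ (J - 1) \<le> 2 ^ (j - 1)" by (intro power_increasing) auto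
    then show "2 ^ (J - 1) \<le> k" using assms by linarith
  next
    assume h: "2 ^ (J - 1) \<le> k"
    show "J \<le> j"
    proof (rule ccontr)
      assume "\<not> J \<le> j"
      then have "(2::nat) ^ j \<le> 2 ^ (J - 1)" by (intro power_increasing) auto
      then show False using h assms by linarith
    qed
  qed
qed

lemma Pi_hi: "Pi_dy j (hi J f) = (if J \<le> j then Pi_dy j f else (\<lambda>w k. 0))"
  using block_vs_cut by (auto simp: Pi_dy_def hi_def fun_eq_iff)

lemma Pi_lo: "Pi_dy j (lo J f) = (if j < J then Pi_dy j f else (\<lambda>w k. 0))"
proof -
  have "Pi_dy j (lo J f) w k = (if j < J then Pi_dy j f else (\<lambda>w k. 0)) w k" for w k
  proof (cases "2 ^ (j - 1) \<le> k \<and> k < (2::nat) ^ j")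
    case True
    then have "k \<noteq> 0" "k < 2 ^ (J - 1) \<longleftrightarrow> j < J" using block_vs_cut(1)[of j k J] block_vs_cut(2)[of j k] by auto
    then show ?thesis using True by (simp add: Pi_dy_def lo_def)
  qed (auto simp: Pi_dy_def lo_def)
  then show ?thesis by (simp add: fun_eq_iff)
qed

lemma cm_hi: "coeff_measurable M f \<Longrightarrow> coeff_measurable M (hi J f)"
  unfolding hi_def by (rule cm_restrict)

lemma cm_lo: "coeff_measurable M f \<Longrightarrow> coeff_measurable M (lo J f)"
  unfolding lo_def by (rule cm_restrict)

lemma N_hi:
  assumes p: "1 \<le> p" and cm: "coeff_measurable M f"
  shows "LpH_norm M lam p s (hi J f) \<le> (\<Sum>j. if J \<le> j then LpH_norm M lam p s (Pi_dy j f) else 0)"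
  using N_sum_blocks[OF p cm_hi[OF cm], of lam s J] by (simp add: Pi_hi N_zero[OF p] if_distrib cong: if_cong)

lemma N_lo:
  assumes p: "1 \<le> p" and cm: "coeff_measurable M f"
  shows "LpH_norm M lam p s (lo J f) \<le> (\<Sum>j. if j < J then LpH_norm M lam p s (Pi_dy j f) else 0)"
  using N_sum_blocks[OF p cm_lo[OF cm], of lam s J] by (simp add: Pi_lo N_zero[OF p] if_distrib cong: if_cong)

lemma K_upper_gen:
  assumes t: "0 < t"
    and h0: "S0 < top \<Longrightarrow> hi J f \<in> fst X0 \<and> snd X0 (hi J f) \<le> S0"
    and h1: "S1 < top \<Longrightarrow> lo J f \<in> fst X1 \<and> snd X1 (lo J f) \<le> S1"
  shows "K_fun X0 X1 t f \<le> S0 + ennreal t * S1"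
proof (cases "S0 + ennreal t * S1 = top")
  case True then show ?thesis by (metis top_greatest)
next
  case False
  then have S0: "S0 < top" and tS1: "ennreal t * S1 < top" by (auto simp: top_unique less_top)
  have S1: "S1 < top"
  proof (rule ccontr)
    assume "\<not> S1 < top"
    then have "S1 = top" using top.not_eq_extremum by blast
    then have "ennreal t * S1 = top" using t by (simp add: ennreal_mult_top)
    with tS1 show False by simp
  qed
  note A = h0[OF S0] and Bb = h1[OF S1]
  have "K_fun X0 X1 t f \<le> snd X0 (hi J f) + ennreal t * snd X1 (lo J f)"
    unfolding K_fun_def using A Bb hi_lo_sum[of J f]
    by (intro INF_lower2[of "(hi J f, lo J f)"]) auto
  also have "\<dots> \<le> S0 + ennreal t * S1" using A Bb by (intro add_mono mult_left_mono) auto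
  finally show ?thesis .
qed

context weyl
begin

lemma K_lower_gen:
  assumes p: "1 \<le> p" and j: "j \<ge> 1" and t: "0 < t"
    and X0: "\<And>g. g \<in> fst X0 \<Longrightarrow> coeff_measurable M g \<and> (\<forall>j\<ge>1. LpH_norm M lam p s0 (Pi_dy j g) \<le> snd X0 g)"
    and X1: "\<And>g. g \<in> fst X1 \<Longrightarrow> coeff_measurable M g \<and> (\<forall>j\<ge>1. LpH_norm M lam p s1 (Pi_dy j g) \<le> snd X1 g)"
  shows "LpH_norm M lam p s0 (Pi_dy j f)
     \<le> ennreal (max 1 (Kc (s0 - s1) * G powr (real j * (s0 - s1)) / t)) * K_fun X0 X1 t f"
proof -
  define E where "E = Kc (s0 - s1) * G powr (real j * (s0 - s1))"
  have E: "0 \<le> E" using Kc_pos[of "s0 - s1"] by (simp add: E_def)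
  define m where "m = max 1 (E / t)"
  have m: "0 < m" "1 \<le> m" "E / t \<le> m" by (auto simp: m_def)
  show ?thesis unfolding K_fun_def E_def[symmetric] m_def[symmetric]
  proof (rule le_cmult_Inf[OF m(1)])
    fix v assume "v \<in> (\<lambda>(f0, f1). snd X0 f0 + ennreal t * snd X1 f1) `
        {(f0, f1). f0 \<in> fst X0 \<and> f1 \<in> fst X1 \<and> f = (\<lambda>w k. f0 w k + f1 w k)}"
    then obtain f0 f1 where f0: "f0 \<in> fst X0" and f1: "f1 \<in> fst X1" and f: "f = (\<lambda>w k. f0 w k + f1 w k)"
      and v: "v = snd X0 f0 + ennreal t * snd X1 f1" by auto
    note c0 = X0[OF f0] and c1 = X1[OF f1]
    have "LpH_norm M lam p s0 (Pi_dy j f) \<le> LpH_norm M lam p s0 (Pi_dy j f0) + LpH_norm M lam p s0 (Pi_dy j f1)"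
      unfolding f Pi_add using c0 c1 by (intro N_add p cm_Pi) auto
    also have "\<dots> \<le> snd X0 f0 + ennreal E * LpH_norm M lam p s1 (Pi_dy j f1)"
      using c0 j N_Pi_scale[OF p j, where f=f1 and s=s0 and s'=s1 and M=M] c1 by (intro add_mono) (auto simp: E_def)
    also have "\<dots> \<le> snd X0 f0 + ennreal E * snd X1 f1"
      using c1 j by (intro add_mono mult_left_mono) auto
    also have "\<dots> \<le> ennreal m * snd X0 f0 + ennreal m * (ennreal t * snd X1 f1)"
    proof (intro add_mono)
      show "snd X0 f0 \<le> ennreal m * snd X0 f0"
      proof -
        have "ennreal 1 * snd X0 f0 \<le> ennreal m * snd X0 f0" using m by (intro mult_right_mono ennreal_leI) auto
        then show ?thesis by simp
      qed
      have "ennreal E = ennreal (E / t) * ennreal t" using t E by (simp add: ennreal_mult[symmetric])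
      also have "\<dots> \<le> ennreal m * ennreal t" using m by (intro mult_right_mono ennreal_leI) auto
      finally show "ennreal E * snd X1 f1 \<le> ennreal m * (ennreal t * snd X1 f1)"
        by (simp add: mult.assoc[symmetric] mult_right_mono)
    qed
    also have "\<dots> = ennreal m * v" by (simp add: v distrib_left)
    finally show "LpH_norm M lam p s0 (Pi_dy j f) \<le> ennreal m * v" .
  qed
qed

end


locale mctx = weyl +
  fixes M :: "'w measure" and p q :: ennreal and \<theta> s0 s1 a :: real
  assumes p1: "1 \<le> p" and q1: "1 \<le> q" and th0: "0 < \<theta>" and th1: "\<theta> < 1"
    and s0: "-2 \<le> s0" and s01: "s0 < s1" and a1: "1 < a"
begin

definition sm where "sm = (1 - \<theta>) * s0 + \<theta> * s1"
definition BB where "BB = G powr (s1 - s0)"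

abbreviation N where "N \<sigma> g \<equiv> LpH_norm M lam p \<sigma> g"

lemma BB_gt1: "1 < BB"
  unfolding BB_def using G_gt1 s01 by (intro gr_one_powr) auto

lemma Gpow: "G powr (real j * (c * (s1 - s0))) = BB powr (real j * c)"
  unfolding BB_def using G_gt1 by (simp add: powr_powr algebra_simps)

lemma GB0: "G powr (real j * (s0 - sm)) = BB powr (- real j * \<theta>)"
  using Gpow[of j "- \<theta>"] by (simp add: sm_def algebra_simps)
lemma GB1: "G powr (real j * (s1 - sm)) = BB powr (real j * (1 - \<theta>))"
  using Gpow[of j "1 - \<theta>"] by (simp add: sm_def algebra_simps)
lemma GBs: "G powr (real j * (sm - s0)) = BB powr (real j * \<theta>)"
  using Gpow[of j "\<theta>"] by (simp add: sm_def algebra_simps)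
lemma GB01: "G powr (real j * (s0 - s1)) = BB powr (- real j)"
  using Gpow[of j "- 1"] by (simp add: algebra_simps)

lemma y0_bound:
  assumes cm: "coeff_measurable M f"
  shows "N s0 (Pi_dy j f) \<le> ennreal (Kc (s0 - sm) * BB powr (- real j * \<theta>)) * N sm (Pi_dy j f)"
proof (cases "j = 0")
  case True then show ?thesis using p1 by (simp add: Pi_0 N_zero)
next
  case False then show ?thesis using N_Pi_scale[OF p1 _ cm, of j s0 sm] by (simp add: GB0)
qed

lemma y1_bound:
  assumes cm: "coeff_measurable M f"
  shows "N s1 (Pi_dy j f) \<le> ennreal (Kc (s1 - sm) * BB powr (real j * (1 - \<theta>))) * N sm (Pi_dy j f)"
proof (cases "j = 0")
  case True then show ?thesis using p1 by (simp add: Pi_0 N_zero)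
next
  case False then show ?thesis using N_Pi_scale[OF p1 _ cm, of j s1 sm] by (simp add: GB1)
qed

definition DU where "DU = max (Kc (s0 - sm)) (Kc (s1 - sm))"
definition DL where "DL = Kc (sm - s0) * max 1 (Kc (s0 - s1))"

lemma upper_hyp:
  assumes cm: "coeff_measurable M f" and t: "0 < t"
    and h0: "\<And>J S0. S0 < top \<Longrightarrow> S0 = (\<Sum>j. if J \<le> j then N s0 (Pi_dy j f) else 0) \<Longrightarrow>
               hi J f \<in> fst X0 \<and> snd X0 (hi J f) \<le> S0"
    and h1: "\<And>J S1. S1 < top \<Longrightarrow> S1 = (\<Sum>j. if j < J then N s1 (Pi_dy j f) else 0) \<Longrightarrow>
               lo J f \<in> fst X1 \<and> snd X1 (lo J f) \<le> S1"
  shows "K_fun X0 X1 t f \<le> (\<Sum>j. ennreal (DU * min (BB powr (- real j * \<theta>)) (t * BB powr (real j * (1 - \<theta>))))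
            * N sm (Pi_dy j f))"
proof -
  define J where "J = (LEAST J. BB powr (- real J) \<le> t)"
  have "K_fun X0 X1 t f \<le> (\<Sum>j. if J \<le> j then N s0 (Pi_dy j f) else 0) + ennreal t * (\<Sum>j. if j < J then N s1 (Pi_dy j f) else 0)"
    by (rule K_upper_gen[OF t, where J=J]) (use h0[where J=J, OF _ refl] h1[where J=J, OF _ refl] in auto)
  also have "\<dots> \<le> (\<Sum>j. ennreal (DU * min (BB powr (- real j * \<theta>)) (t * BB powr (real j * (1 - \<theta>)))) * N sm (Pi_dy j f))"
    using Kc_pos[of "s0 - sm"] Kc_pos[of "s1 - sm"]
    by (intro split_sum_bound[OF BB_gt1 th0 th1 t _ _ _ _ J_def y0_bound[OF cm] y1_bound[OF cm]])
       (auto simp: DU_def less_imp_le)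
  finally show ?thesis .
qed

lemma lower_hyp:
  assumes cm: "coeff_measurable M f" and t: "0 < t" and j: "j \<ge> 1"
    and X0: "\<And>g. g \<in> fst X0 \<Longrightarrow> coeff_measurable M g \<and> (\<forall>j\<ge>1. N s0 (Pi_dy j g) \<le> snd X0 g)"
    and X1: "\<And>g. g \<in> fst X1 \<Longrightarrow> coeff_measurable M g \<and> (\<forall>j\<ge>1. N s1 (Pi_dy j g) \<le> snd X1 g)"
  shows "N sm (Pi_dy j f) \<le> ennreal (DL * BB powr (real j * \<theta>) * max 1 (BB powr (- real j) / t)) * K_fun X0 X1 t f"
proof -
  have k1: "0 < Kc (s0 - s1)" "0 < Kc (sm - s0)" using Kc_pos by auto
  have "N sm (Pi_dy j f) \<le> ennreal (Kc (sm - s0) * BB powr (real j * \<theta>)) * N s0 (Pi_dy j f)"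
    using N_Pi_scale[OF p1 j cm, of sm s0] by (simp add: GBs)
  also have "\<dots> \<le> ennreal (Kc (sm - s0) * BB powr (real j * \<theta>)) *
      (ennreal (max 1 (Kc (s0 - s1) * BB powr (- real j) / t)) * K_fun X0 X1 t f)"
    using K_lower_gen[OF p1 j t X0 X1, of f] by (intro mult_left_mono) (auto simp: GB01)
  also have "\<dots> = ennreal (Kc (sm - s0) * BB powr (real j * \<theta>) * max 1 (Kc (s0 - s1) * BB powr (- real j) / t)) * K_fun X0 X1 t f"
    using k1 by (simp add: ennreal_mult mult.assoc)
  also have "\<dots> \<le> ennreal (DL * BB powr (real j * \<theta>) * max 1 (BB powr (- real j) / t)) * K_fun X0 X1 t f"
  proof (intro mult_right_mono ennreal_leI)
    have "max 1 (Kc (s0 - s1) * BB powr (- real j) / t) \<le> max 1 (Kc (s0 - s1)) * max 1 (BB powr (- real j) / t)"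
    proof -
      have "Kc (s0 - s1) * BB powr (- real j) / t = Kc (s0 - s1) * (BB powr (- real j) / t)" by simp
      also have "\<dots> \<le> max 1 (Kc (s0 - s1)) * max 1 (BB powr (- real j) / t)"
        using k1 t by (intro mult_mono) auto
      moreover have "1 \<le> max 1 (Kc (s0 - s1)) * max 1 (BB powr (- real j) / t)"
      proof -
        have "1 * 1 \<le> max 1 (Kc (s0 - s1)) * max 1 (BB powr (- real j) / t)" by (intro mult_mono) auto
        then show ?thesis by simp
      qed
      ultimately show ?thesis by simp
    qed
    then have "Kc (sm - s0) * BB powr (real j * \<theta>) * max 1 (Kc (s0 - s1) * BB powr (- real j) / t)
        \<le> Kc (sm - s0) * BB powr (real j * \<theta>) * (max 1 (Kc (s0 - s1)) * max 1 (BB powr (- real j) / t))"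
      by (rule mult_left_mono) (use k1 in auto)
    also have "\<dots> = DL * BB powr (real j * \<theta>) * max 1 (BB powr (- real j) / t)"
      by (simp add: DL_def algebra_simps)
    finally show "Kc (sm - s0) * BB powr (real j * \<theta>) * max 1 (Kc (s0 - s1) * BB powr (- real j) / t)
        \<le> DL * BB powr (real j * \<theta>) * max 1 (BB powr (- real j) / t)" .
  qed auto
  finally show ?thesis .
qed

end


context mctx
begin

lemma CU_ex:
  "\<exists>C>0. \<forall>f X0 X1. coeff_measurable M f \<longrightarrow>
     (\<forall>J S0. S0 < top \<longrightarrow> S0 = (\<Sum>j. if J \<le> j then N s0 (Pi_dy j f) else 0) \<longrightarrow>
               hi J f \<in> fst X0 \<and> snd X0 (hi J f) \<le> S0) \<longrightarrow>
     (\<forall>J S1. S1 < top \<longrightarrow> S1 = (\<Sum>j. if j < J then N s1 (Pi_dy j f) else 0) \<longrightarrow>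
               lo J f \<in> fst X1 \<and> snd X1 (lo J f) \<le> S1) \<longrightarrow>
     interp_norm a X0 X1 \<theta> q f \<le> ennreal C * BLpH_norm M lam q p sm f"
proof -
  have DU: "0 \<le> DU" using Kc_pos[of "s0 - sm"] by (simp add: DU_def le_max_iff_disj less_imp_le)
  obtain C where C: "C > 0" and H: "\<And>(x::nat \<Rightarrow> ennreal) (K::real \<Rightarrow> ennreal).
     (\<forall>t>0. K t \<le> (\<Sum>j. ennreal (DU * min (BB powr (- real j * \<theta>)) (t * BB powr (real j * (1 - \<theta>)))) * x j)) \<Longrightarrow>
     Lpn (count_space UNIV) q (\<lambda>m::int. ennreal (a powr (- real_of_int m * \<theta>)) * K (a powr real_of_int m))
       \<le> ennreal C * Lpn (count_space UNIV) q x"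
    using hardy_upper[OF a1 BB_gt1 th0 th1 q1 DU] by blast
  show ?thesis
  proof (intro exI[of _ C] conjI C allI impI)
    fix f X0 X1
    assume cm: "coeff_measurable M f"
      and h0: "\<forall>J S0. S0 < top \<longrightarrow> S0 = (\<Sum>j. if J \<le> j then N s0 (Pi_dy j f) else 0) \<longrightarrow>
               hi J f \<in> fst X0 \<and> snd X0 (hi J f) \<le> S0"
      and h1: "\<forall>J S1. S1 < top \<longrightarrow> S1 = (\<Sum>j. if j < J then N s1 (Pi_dy j f) else 0) \<longrightarrow>
               lo J f \<in> fst X1 \<and> snd X1 (lo J f) \<le> S1"
    have "\<forall>t>0. K_fun X0 X1 t f \<le> (\<Sum>j. ennreal (DU * min (BB powr (- real j * \<theta>)) (t * BB powr (real j * (1 - \<theta>)))) * N sm (Pi_dy j f))"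
      using h0 h1 by (intro allI impI upper_hyp[OF cm]) auto
    from H[OF this] show "interp_norm a X0 X1 \<theta> q f \<le> ennreal C * BLpH_norm M lam q p sm f"
      by (simp add: interp_norm_Lpn BLpH_norm_Lpn[OF p1])
  qed
qed

lemma CL_ex:
  "\<exists>C>0. \<forall>f X0 X1. coeff_measurable M f \<longrightarrow>
     (\<forall>g. g \<in> fst X0 \<longrightarrow> coeff_measurable M g \<and> (\<forall>j\<ge>1. N s0 (Pi_dy j g) \<le> snd X0 g)) \<longrightarrow>
     (\<forall>g. g \<in> fst X1 \<longrightarrow> coeff_measurable M g \<and> (\<forall>j\<ge>1. N s1 (Pi_dy j g) \<le> snd X1 g)) \<longrightarrow>
     BLpH_norm M lam q p sm f \<le> ennreal C * interp_norm a X0 X1 \<theta> q f"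
proof -
  have DL: "0 \<le> DL" using Kc_pos[of "sm - s0"] by (simp add: DL_def)
  obtain C where C: "C > 0" and H: "\<And>(x::nat \<Rightarrow> ennreal) (K::real \<Rightarrow> ennreal). x 0 = 0 \<Longrightarrow>
     (\<forall>t>0. \<forall>j\<ge>1. x j \<le> ennreal (DL * BB powr (real j * \<theta>) * max 1 (BB powr (- real j) / t)) * K t) \<Longrightarrow>
     Lpn (count_space UNIV) q x \<le> ennreal C *
       Lpn (count_space UNIV) q (\<lambda>m::int. ennreal (a powr (- real_of_int m * \<theta>)) * K (a powr real_of_int m))"
    using hardy_lower[OF a1 BB_gt1 th0 q1 DL] by blast
  show ?thesis
  proof (intro exI[of _ C] conjI C allI impI)
    fix f X0 X1
    assume cm: "coeff_measurable M f"
      and X0: "\<forall>g. g \<in> fst X0 \<longrightarrow> coeff_measurable M g \<and> (\<forall>j\<ge>1. N s0 (Pi_dy j g) \<le> snd X0 g)"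
      and X1: "\<forall>g. g \<in> fst X1 \<longrightarrow> coeff_measurable M g \<and> (\<forall>j\<ge>1. N s1 (Pi_dy j g) \<le> snd X1 g)"
    have x0: "N sm (Pi_dy 0 f) = 0" using p1 by (simp add: Pi_0 N_zero)
    have "\<forall>t>0. \<forall>j\<ge>1. N sm (Pi_dy j f) \<le> ennreal (DL * BB powr (real j * \<theta>) * max 1 (BB powr (- real j) / t)) * K_fun X0 X1 t f"
      using X0 X1 by (intro allI impI lower_hyp[OF cm]) auto
    from H[OF x0 this] show "BLpH_norm M lam q p sm f \<le> ennreal C * interp_norm a X0 X1 \<theta> q f"
      by (simp add: interp_norm_Lpn BLpH_norm_Lpn[OF p1])
  qed
qed

end


lemma LpH_mem: "g \<in> LpH M lam p \<sigma> \<longleftrightarrow> coeff_measurable M g \<and> LpH_norm M lam p \<sigma> g < top"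
  by (simp add: LpH_def)

lemma BLpH_mem: "g \<in> BLpH M lam q' p \<sigma> \<longleftrightarrow> g \<in> LpH M lam p (-2) \<and> BLpH_norm M lam q' p \<sigma> g < top"
  by (simp add: BLpH_def)

lemma BLpH_inf_norm: "BLpH_norm M lam top p \<sigma> g = (SUP j\<in>{1..}. LpH_norm M lam p \<sigma> (Pi_dy j g))"
  by (simp add: BLpH_norm_def)

context mctx
begin

lemma single_le_sum: "(if J \<le> j then (y::nat\<Rightarrow>ennreal) j else 0) \<le> (\<Sum>j. if J \<le> j then y j else 0)"
  using sum_le_suminf[OF summableI, of "{j}" "\<lambda>j. if J \<le> j then y j else 0"] by simp

lemma single_le_sum': "(if j < J then (y::nat\<Rightarrow>ennreal) j else 0) \<le> (\<Sum>j. if j < J then y j else 0)"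
  using sum_le_suminf[OF summableI, of "{j}" "\<lambda>j. if j < J then y j else 0"] by simp

lemma h0_LpH:
  assumes cm: "coeff_measurable M f"
  shows "\<forall>J S0. S0 < top \<longrightarrow> S0 = (\<Sum>j. if J \<le> j then N s0 (Pi_dy j f) else 0) \<longrightarrow>
               hi J f \<in> fst (LpH_sp M lam p s0) \<and> snd (LpH_sp M lam p s0) (hi J f) \<le> S0"
  using N_hi[OF p1 cm] cm_hi[OF cm] by (auto simp: LpH_sp_def LpH_mem intro: le_less_trans)

lemma h1_LpH:
  assumes cm: "coeff_measurable M f"
  shows "\<forall>J S1. S1 < top \<longrightarrow> S1 = (\<Sum>j. if j < J then N s1 (Pi_dy j f) else 0) \<longrightarrow>
               lo J f \<in> fst (LpH_sp M lam p s1) \<and> snd (LpH_sp M lam p s1) (lo J f) \<le> S1"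
  using N_lo[OF p1 cm] cm_lo[OF cm] by (auto simp: LpH_sp_def LpH_mem intro: le_less_trans)

lemma X_LpH: "\<forall>g. g \<in> fst (LpH_sp M lam p \<sigma>) \<longrightarrow> coeff_measurable M g \<and> (\<forall>j\<ge>1. N \<sigma> (Pi_dy j g) \<le> snd (LpH_sp M lam p \<sigma>) g)"
  by (auto simp: LpH_sp_def LpH_mem N_Pi_le)

lemma X_BLpH: "\<forall>g. g \<in> fst (BLpH_sp M lam \<infinity> p \<sigma>) \<longrightarrow> coeff_measurable M g \<and> (\<forall>j\<ge>1. N \<sigma> (Pi_dy j g) \<le> snd (BLpH_sp M lam \<infinity> p \<sigma>) g)"
  by (auto simp: BLpH_sp_def BLpH_mem LpH_mem BLpH_inf_norm intro: SUP_upper)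

lemma h0_BLpH:
  assumes f: "f \<in> LpH M lam p (-2)"
  shows "\<forall>J S0. S0 < top \<longrightarrow> S0 = (\<Sum>j. if J \<le> j then N s0 (Pi_dy j f) else 0) \<longrightarrow>
               hi J f \<in> fst (BLpH_sp M lam \<infinity> p s0) \<and> snd (BLpH_sp M lam \<infinity> p s0) (hi J f) \<le> S0"
proof (intro allI impI)
  fix J S0 assume S0: "S0 < top" "S0 = (\<Sum>j. if J \<le> j then N s0 (Pi_dy j f) else 0)"
  have cm: "coeff_measurable M f" using f by (simp add: LpH_mem)
  have n: "BLpH_norm M lam \<infinity> p s0 (hi J f) \<le> S0"
    unfolding infinity_ennreal_def BLpH_inf_norm
  proof (rule SUP_least)
    fix j
    have "N s0 (Pi_dy j (hi J f)) = (if J \<le> j then N s0 (Pi_dy j f) else 0)"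
      by (simp add: Pi_hi N_zero[OF p1])
    then show "N s0 (Pi_dy j (hi J f)) \<le> S0" using single_le_sum[of J j "\<lambda>j. N s0 (Pi_dy j f)"] S0 by simp
  qed
  have "N (-2) (hi J f) \<le> N (-2) f" by (rule N_mono) (simp add: hi_def)
  then have "hi J f \<in> LpH M lam p (-2)" using f cm_hi[OF cm] by (auto simp: LpH_mem intro: le_less_trans)
  then show "hi J f \<in> fst (BLpH_sp M lam \<infinity> p s0) \<and> snd (BLpH_sp M lam \<infinity> p s0) (hi J f) \<le> S0"
    using n S0 by (auto simp: BLpH_sp_def BLpH_mem intro: le_less_trans)
qed

lemma h1_BLpH:
  assumes f: "f \<in> LpH M lam p (-2)"
  shows "\<forall>J S1. S1 < top \<longrightarrow> S1 = (\<Sum>j. if j < J then N s1 (Pi_dy j f) else 0) \<longrightarrow>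
               lo J f \<in> fst (BLpH_sp M lam \<infinity> p s1) \<and> snd (BLpH_sp M lam \<infinity> p s1) (lo J f) \<le> S1"
proof (intro allI impI)
  fix J S1 assume S1: "S1 < top" "S1 = (\<Sum>j. if j < J then N s1 (Pi_dy j f) else 0)"
  have cm: "coeff_measurable M f" using f by (simp add: LpH_mem)
  have n: "BLpH_norm M lam \<infinity> p s1 (lo J f) \<le> S1"
    unfolding infinity_ennreal_def BLpH_inf_norm
  proof (rule SUP_least)
    fix j
    have "N s1 (Pi_dy j (lo J f)) = (if j < J then N s1 (Pi_dy j f) else 0)"
      by (simp add: Pi_lo N_zero[OF p1])
    then show "N s1 (Pi_dy j (lo J f)) \<le> S1" using single_le_sum'[of j J "\<lambda>j. N s1 (Pi_dy j f)"] S1 by simp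
  qed
  have "N (-2) (lo J f) \<le> N (-2) f" by (rule N_mono) (simp add: lo_def)
  then have "lo J f \<in> LpH M lam p (-2)" using f cm_lo[OF cm] by (auto simp: LpH_mem intro: le_less_trans)
  then show "lo J f \<in> fst (BLpH_sp M lam \<infinity> p s1) \<and> snd (BLpH_sp M lam \<infinity> p s1) (lo J f) \<le> S1"
    using n S1 by (auto simp: BLpH_sp_def BLpH_mem intro: le_less_trans)
qed

lemma blk_le_Bn:
  assumes f: "f \<in> BLpH M lam q p sm"
  shows "N s0 (Pi_dy j f) \<le> ennreal (Kc (s0 - sm) * BB powr (- real j * \<theta>)) * BLpH_norm M lam q p sm f"
proof -
  have cm: "coeff_measurable M f" using f by (simp add: BLpH_mem LpH_mem)
  have "N sm (Pi_dy j f) \<le> BLpH_norm M lam q p sm f"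
    unfolding BLpH_norm_Lpn[OF p1] by (rule Lpn_count_elem[OF q1])
  then show ?thesis using y0_bound[OF cm, of j] by (meson mult_left_mono order_trans zero_le)
qed

lemma BLpH_s0:
  assumes f: "f \<in> BLpH M lam q p sm"
  shows "f \<in> LpH M lam p s0" "f \<in> BLpH M lam \<infinity> p s0"
proof -
  have cm: "coeff_measurable M f" and fm: "f \<in> LpH M lam p (-2)" and Bn: "BLpH_norm M lam q p sm f < top"
    using f by (auto simp: BLpH_mem LpH_mem)
  define r where "r = BB powr (- \<theta>)"
  have r: "0 < r" "r < 1" using BB_gt1 th0 by (auto simp: r_def powr_less_one)
  have rj: "BB powr (- real j * \<theta>) = r ^ j" for j
  proof -
    have "BB powr (- real j * \<theta>) = (BB powr (-\<theta>)) powr real j" by (simp add: powr_powr mult.commute)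
    also have "\<dots> = r ^ j" using BB_gt1 by (simp add: r_def powr_realpow)
    finally show ?thesis .
  qed
  have K0: "0 < Kc (s0 - sm)" by (rule Kc_pos)
  have "N s0 f \<le> (\<Sum>j. N s0 (Pi_dy j f))" by (rule N_sum_blocks[OF p1 cm])
  also have "\<dots> \<le> (\<Sum>j. ennreal (Kc (s0 - sm) * r ^ j) * BLpH_norm M lam q p sm f)"
  proof (intro suminf_le summableI)
    fix n show "N s0 (Pi_dy n f) \<le> ennreal (Kc (s0 - sm) * r ^ n) * BLpH_norm M lam q p sm f"
      using blk_le_Bn[OF f, of n] rj[of n] by simp
  qed
  also have "\<dots> = (\<Sum>j. BLpH_norm M lam q p sm f * ennreal (Kc (s0 - sm) * r ^ j))"
    by (simp only: mult.commute)
  also have "\<dots> = BLpH_norm M lam q p sm f * (\<Sum>j. ennreal (Kc (s0 - sm) * r ^ j))"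
    by (rule ennreal_suminf_cmult)
  also have "\<dots> = (\<Sum>j. ennreal (Kc (s0 - sm) * r ^ j)) * BLpH_norm M lam q p sm f"
    by (rule mult.commute)
  also have "(\<Sum>j. ennreal (Kc (s0 - sm) * r ^ j)) = ennreal (Kc (s0 - sm) * (1 / (1 - r)))"
    using r K0 by (intro suminf_ennreal_eq sums_mult geometric_sums) auto
  finally have "N s0 f \<le> ennreal (Kc (s0 - sm) * (1 / (1 - r))) * BLpH_norm M lam q p sm f" .
  moreover have "ennreal (Kc (s0 - sm) * (1 / (1 - r))) * BLpH_norm M lam q p sm f < top"
    using Bn by (simp add: ennreal_mult_less_top)
  ultimately have "N s0 f < top" by (rule le_less_trans)
  then show "f \<in> LpH M lam p s0" using cm by (simp add: LpH_mem)
  have "BLpH_norm M lam \<infinity> p s0 f \<le> ennreal (Kc (s0 - sm)) * BLpH_norm M lam q p sm f"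
    unfolding infinity_ennreal_def BLpH_inf_norm
  proof (rule SUP_least)
    fix j
    have "r ^ j \<le> 1" using r by (simp add: power_le_one)
    then have "BB powr (- real j * \<theta>) \<le> 1" by (simp only: rj)
    then have "ennreal (Kc (s0 - sm) * BB powr (- real j * \<theta>)) \<le> ennreal (Kc (s0 - sm))"
      using K0 by (intro ennreal_leI mult_left_le) auto
    then show "N s0 (Pi_dy j f) \<le> ennreal (Kc (s0 - sm)) * BLpH_norm M lam q p sm f"
      using blk_le_Bn[OF f, of j] by (meson mult_right_mono order_trans zero_le)
  qed
  moreover have "ennreal (Kc (s0 - sm)) * BLpH_norm M lam q p sm f < top"
    using Bn by (simp add: ennreal_mult_less_top)
  ultimately have "BLpH_norm M lam \<infinity> p s0 f < top" by (rule le_less_trans)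
  then show "f \<in> BLpH M lam \<infinity> p s0" using fm by (simp add: BLpH_mem)
qed

lemma zero_mem: "(\<lambda>w k. 0) \<in> LpH M lam p s1" "(\<lambda>w k. 0) \<in> BLpH M lam \<infinity> p s1"
proof -
  have z: "LpH_norm M lam p \<sigma> (\<lambda>w k. 0) = 0" for \<sigma> by (rule N_zero[OF p1])
  have pz: "Pi_dy j (\<lambda>w k. 0) = (\<lambda>w k. 0)" for j by (simp add: Pi_dy_def)
  show "(\<lambda>w k. 0) \<in> LpH M lam p s1" using cm_zero by (simp add: LpH_mem z)
  show "(\<lambda>w k. 0) \<in> BLpH M lam \<infinity> p s1" using cm_zero by (simp add: BLpH_mem LpH_mem BLpH_inf_norm z pz)
qed

end


lemma inv_bound:
  fixes X Y :: ennreal assumes C: "0 < C" and h: "X \<le> ennreal C * Y"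
  shows "ennreal (1 / C) * X \<le> Y"
proof -
  have "ennreal (1 / C) * X \<le> ennreal (1 / C) * (ennreal C * Y)" using h by (rule mult_left_mono) simp
  also have "\<dots> = (ennreal (1 / C) * ennreal C) * Y" by (rule mult.assoc[symmetric])
  also have "ennreal (1 / C) * ennreal C = 1" using C by (simp add: ennreal_mult[symmetric])
  finally show ?thesis by simp
qed

lemma mult_fin: "(x::ennreal) < top \<Longrightarrow> ennreal c * x < top"
  by (simp add: ennreal_mult_less_top)

context mctx
begin

lemma main:
  "equiv_spaces (BLpH_sp M lam q p sm) (interp_space a (LpH_sp M lam p s0) (LpH_sp M lam p s1) \<theta> q)
   \<and> equiv_spaces (interp_space a (BLpH_sp M lam \<infinity> p s0) (BLpH_sp M lam \<infinity> p s1) \<theta> q) (BLpH_sp M lam q p sm)"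
proof -
  obtain CU where CU: "CU > 0" and HU: "\<And>f X0 X1. coeff_measurable M f \<Longrightarrow>
     (\<forall>J S0. S0 < top \<longrightarrow> S0 = (\<Sum>j. if J \<le> j then N s0 (Pi_dy j f) else 0) \<longrightarrow>
               hi J f \<in> fst X0 \<and> snd X0 (hi J f) \<le> S0) \<Longrightarrow>
     (\<forall>J S1. S1 < top \<longrightarrow> S1 = (\<Sum>j. if j < J then N s1 (Pi_dy j f) else 0) \<longrightarrow>
               lo J f \<in> fst X1 \<and> snd X1 (lo J f) \<le> S1) \<Longrightarrow>
     interp_norm a X0 X1 \<theta> q f \<le> ennreal CU * BLpH_norm M lam q p sm f"
    using CU_ex by blast
  obtain CL where CL: "CL > 0" and HL: "\<And>f X0 X1. coeff_measurable M f \<Longrightarrow>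
     (\<forall>g. g \<in> fst X0 \<longrightarrow> coeff_measurable M g \<and> (\<forall>j\<ge>1. N s0 (Pi_dy j g) \<le> snd X0 g)) \<Longrightarrow>
     (\<forall>g. g \<in> fst X1 \<longrightarrow> coeff_measurable M g \<and> (\<forall>j\<ge>1. N s1 (Pi_dy j g) \<le> snd X1 g)) \<Longrightarrow>
     BLpH_norm M lam q p sm f \<le> ennreal CL * interp_norm a X0 X1 \<theta> q f"
    using CL_ex by blast
  have s1: "-2 \<le> s1" using s0 s01 by simp
  have fz: "(\<lambda>w k. f w k + 0) = f" for f :: "'w \<Rightarrow> nat \<Rightarrow> real" by simp
  define Y1 where "Y1 = interp_space a (LpH_sp M lam p s0) (LpH_sp M lam p s1) \<theta> q"
  have up1: "interp_norm a (LpH_sp M lam p s0) (LpH_sp M lam p s1) \<theta> q f \<le> ennreal CU * BLpH_norm M lam q p sm f"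
    if "f \<in> BLpH M lam q p sm" for f
  proof -
    have cm: "coeff_measurable M f" using that by (simp add: BLpH_mem LpH_mem)
    show ?thesis by (rule HU[OF cm h0_LpH[OF cm] h1_LpH[OF cm]])
  qed
  have lo1: "BLpH_norm M lam q p sm f \<le> ennreal CL * interp_norm a (LpH_sp M lam p s0) (LpH_sp M lam p s1) \<theta> q f"
    if "coeff_measurable M f" for f
    by (rule HL[OF that X_LpH X_LpH])
  have car1: "BLpH M lam q p sm = fst Y1"
  proof
    show "BLpH M lam q p sm \<subseteq> fst Y1"
    proof
      fix f assume f: "f \<in> BLpH M lam q p sm"
      have "f \<in> sum_space (LpH_sp M lam p s0) (LpH_sp M lam p s1)"
        unfolding sum_space_def LpH_sp_def using BLpH_s0(1)[OF f] zero_mem(1) fz[of f]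
        by (intro CollectI bexI[of _ f] bexI[of _ "\<lambda>w k. 0"]) auto
      moreover have "interp_norm a (LpH_sp M lam p s0) (LpH_sp M lam p s1) \<theta> q f < top"
        using up1[OF f] mult_fin[of "BLpH_norm M lam q p sm f" CU] f
        by (auto simp: BLpH_mem intro: le_less_trans)
      ultimately show "f \<in> fst Y1" by (simp add: Y1_def interp_space_def)
    qed
    show "fst Y1 \<subseteq> BLpH M lam q p sm"
    proof
      fix f assume f: "f \<in> fst Y1"
      then obtain f0 f1 where f0: "f0 \<in> LpH M lam p s0" and f1: "f1 \<in> LpH M lam p s1"
        and fe: "f = (\<lambda>w k. f0 w k + f1 w k)"
        and fin: "interp_norm a (LpH_sp M lam p s0) (LpH_sp M lam p s1) \<theta> q f < top"
        by (auto simp: Y1_def interp_space_def sum_space_def LpH_sp_def)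
      have c0: "coeff_measurable M f0" "N s0 f0 < top" and c1: "coeff_measurable M f1" "N s1 f1 < top"
        using f0 f1 by (auto simp: LpH_mem)
      have cm: "coeff_measurable M f" unfolding fe by (rule cm_add[OF c0(1) c1(1)])
      have "N (-2) f \<le> N (-2) f0 + N (-2) f1" unfolding fe by (rule N_add[OF p1 c0(1) c1(1)])
      also have "\<dots> \<le> ennreal (lam 1 powr ((-2 - s0)/2)) * N s0 f0 + ennreal (lam 1 powr ((-2 - s1)/2)) * N s1 f1"
        by (intro add_mono N_neg2[OF p1 s0 c0(1)] N_neg2[OF p1 s1 c1(1)])
      also have "\<dots> < top" using c0 c1 by (simp add: mult_fin)
      finally have m2: "f \<in> LpH M lam p (-2)" using cm by (simp add: LpH_mem)
      have "BLpH_norm M lam q p sm f < top"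
        using lo1[OF cm] mult_fin[OF fin, of CL] by (rule le_less_trans)
      then show "f \<in> BLpH M lam q p sm" using m2 by (simp add: BLpH_mem)
    qed
  qed
  have b1: "\<forall>f\<in>fst (BLpH_sp M lam q p sm). ennreal (1 / CL) * snd (BLpH_sp M lam q p sm) f \<le> snd Y1 f
      \<and> snd Y1 f \<le> ennreal CU * snd (BLpH_sp M lam q p sm) f"
  proof
    fix f assume f: "f \<in> fst (BLpH_sp M lam q p sm)"
    then have f': "f \<in> BLpH M lam q p sm" by (simp add: BLpH_sp_def)
    have cm: "coeff_measurable M f" using f' by (simp add: BLpH_mem LpH_mem)
    show "ennreal (1 / CL) * snd (BLpH_sp M lam q p sm) f \<le> snd Y1 f
      \<and> snd Y1 f \<le> ennreal CU * snd (BLpH_sp M lam q p sm) f"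
      using inv_bound[OF CL lo1[OF cm]] up1[OF f'] by (simp add: BLpH_sp_def Y1_def interp_space_def)
  qed
  have ex1: "\<exists>c C. 0 < c \<and> 0 < C \<and> (\<forall>f\<in>fst (BLpH_sp M lam q p sm). ennreal c * snd (BLpH_sp M lam q p sm) f \<le> snd Y1 f
      \<and> snd Y1 f \<le> ennreal C * snd (BLpH_sp M lam q p sm) f)"
    using b1 CL CU by (intro exI[of _ "1 / CL"] exI[of _ CU]) auto
  have eq1: "equiv_spaces (BLpH_sp M lam q p sm) Y1"
    unfolding equiv_spaces_def using ex1 car1 by (simp add: BLpH_sp_def)
  define Y2 where "Y2 = interp_space a (BLpH_sp M lam \<infinity> p s0) (BLpH_sp M lam \<infinity> p s1) \<theta> q"
  have up2: "interp_norm a (BLpH_sp M lam \<infinity> p s0) (BLpH_sp M lam \<infinity> p s1) \<theta> q f \<le> ennreal CU * BLpH_norm M lam q p sm f"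
    if "f \<in> BLpH M lam q p sm" for f
  proof -
    have m2: "f \<in> LpH M lam p (-2)" using that by (simp add: BLpH_mem)
    then have cm: "coeff_measurable M f" by (simp add: LpH_mem)
    show ?thesis by (rule HU[OF cm h0_BLpH[OF m2] h1_BLpH[OF m2]])
  qed
  have lo2: "BLpH_norm M lam q p sm f \<le> ennreal CL * interp_norm a (BLpH_sp M lam \<infinity> p s0) (BLpH_sp M lam \<infinity> p s1) \<theta> q f"
    if "coeff_measurable M f" for f
    by (rule HL[OF that X_BLpH X_BLpH])
  have car2: "fst Y2 = BLpH M lam q p sm"
  proof
    show "BLpH M lam q p sm \<subseteq> fst Y2"
    proof
      fix f assume f: "f \<in> BLpH M lam q p sm"
      have "f \<in> sum_space (BLpH_sp M lam \<infinity> p s0) (BLpH_sp M lam \<infinity> p s1)"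
        unfolding sum_space_def BLpH_sp_def using BLpH_s0(2)[OF f] zero_mem(2) fz[of f]
        by (intro CollectI bexI[of _ f] bexI[of _ "\<lambda>w k. 0"]) auto
      moreover have "interp_norm a (BLpH_sp M lam \<infinity> p s0) (BLpH_sp M lam \<infinity> p s1) \<theta> q f < top"
        using up2[OF f] mult_fin[of "BLpH_norm M lam q p sm f" CU] f
        by (auto simp: BLpH_mem intro: le_less_trans)
      ultimately show "f \<in> fst Y2" by (simp add: Y2_def interp_space_def)
    qed
    show "fst Y2 \<subseteq> BLpH M lam q p sm"
    proof
      fix f assume f: "f \<in> fst Y2"
      then obtain f0 f1 where f0: "f0 \<in> BLpH M lam \<infinity> p s0" and f1: "f1 \<in> BLpH M lam \<infinity> p s1"
        and fe: "f = (\<lambda>w k. f0 w k + f1 w k)"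
        and fin: "interp_norm a (BLpH_sp M lam \<infinity> p s0) (BLpH_sp M lam \<infinity> p s1) \<theta> q f < top"
        by (auto simp: Y2_def interp_space_def sum_space_def BLpH_sp_def)
      have c0: "coeff_measurable M f0" "N (-2) f0 < top" and c1: "coeff_measurable M f1" "N (-2) f1 < top"
        using f0 f1 by (auto simp: BLpH_mem LpH_mem)
      have cm: "coeff_measurable M f" unfolding fe by (rule cm_add[OF c0(1) c1(1)])
      have "N (-2) f \<le> N (-2) f0 + N (-2) f1" unfolding fe by (rule N_add[OF p1 c0(1) c1(1)])
      also have "\<dots> < top" using c0 c1 by simp
      finally have m2: "f \<in> LpH M lam p (-2)" using cm by (simp add: LpH_mem)
      have "BLpH_norm M lam q p sm f < top"
        using lo2[OF cm] mult_fin[OF fin, of CL] by (rule le_less_trans)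
      then show "f \<in> BLpH M lam q p sm" using m2 by (simp add: BLpH_mem)
    qed
  qed
  have b2: "\<forall>f\<in>fst Y2. ennreal (1 / CU) * snd Y2 f \<le> snd (BLpH_sp M lam q p sm) f
      \<and> snd (BLpH_sp M lam q p sm) f \<le> ennreal CL * snd Y2 f"
  proof
    fix f assume f: "f \<in> fst Y2"
    then have f': "f \<in> BLpH M lam q p sm" using car2 by simp
    have cm: "coeff_measurable M f" using f' by (simp add: BLpH_mem LpH_mem)
    show "ennreal (1 / CU) * snd Y2 f \<le> snd (BLpH_sp M lam q p sm) f
      \<and> snd (BLpH_sp M lam q p sm) f \<le> ennreal CL * snd Y2 f"
      using inv_bound[OF CU up2[OF f']] lo2[OF cm] by (simp add: BLpH_sp_def Y2_def interp_space_def)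
  qed
  have ex2: "\<exists>c C. 0 < c \<and> 0 < C \<and> (\<forall>f\<in>fst Y2. ennreal c * snd Y2 f \<le> snd (BLpH_sp M lam q p sm) f
      \<and> snd (BLpH_sp M lam q p sm) f \<le> ennreal C * snd Y2 f)"
    using b2 CL CU by (intro exI[of _ "1 / CU"] exI[of _ CL]) auto
  have eq2: "equiv_spaces Y2 (BLpH_sp M lam q p sm)"
    unfolding equiv_spaces_def using ex2 car2 by (simp add: BLpH_sp_def)
  show ?thesis using eq1 eq2 by (simp add: Y1_def Y2_def)
qed

end

theorem lemma3p3:
  fixes M :: "'w measure" and lam :: "nat \<Rightarrow> real" and d :: nat
    and p q :: ennreal and \<theta> s0 s1 a :: real
  assumes "prob_space M"
    and "dirichlet_eigenvalues d lam"
    and "1 \<le> p" and "1 \<le> q"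
    and "0 < \<theta>" and "\<theta> < 1"
    and "-2 \<le> s0" and "s0 < s1" and "s1 \<le> 2"
    and "1 < a"
  shows "equiv_spaces (BLpH_sp M lam q p ((1 - \<theta>) * s0 + \<theta> * s1))
           (interp_space a (LpH_sp M lam p s0) (LpH_sp M lam p s1) \<theta> q)
       \<and> equiv_spaces (interp_space a (BLpH_sp M lam \<infinity> p s0) (BLpH_sp M lam \<infinity> p s1) \<theta> q)
           (BLpH_sp M lam q p ((1 - \<theta>) * s0 + \<theta> * s1))"
proof -
  from assms(2) obtain c C where d1: "1 \<le> d" and l1: "0 < lam 1" and lm: "\<forall>k\<ge>1. lam k \<le> lam (Suc k)"
    and c: "0 < c" and C: "0 < C"
    and w: "\<forall>k\<ge>1. c * real k powr (2 / real d) \<le> lam k \<and> lam k \<le> C * real k powr (2 / real d)"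
    unfolding dirichlet_eigenvalues_def by blast
  interpret mctx lam d c C M p q \<theta> s0 s1 a
    by unfold_locales (use d1 l1 lm c C w assms in auto)
  show ?thesis using main unfolding sm_def .
qed


end
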